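(* $\mathsf{ConC}_{[0,1]}\equiv_{sW}\overline{\mathsf{ConC}_{[0,1]}}\equiv_{sW}\mathsf{T}\mathsf{ConC}_{[0,1]}$.
   Context: A problem $f:\subseteq X\rightrightarrows Y$ between represented spaces is a partial multi-valued map; $F\vdash f$ means $\delta_YF(p)\in f(\delta_X(p))$ whenever $\delta_X(p)\in\mathrm{dom}(f)$; $f\le_{sW}g$ iff there are computable $H,K$ with $HGK\vdash f$ for all $G\vdash g$. $[0,1]$ is a computable metric space with the Cauchy representation; $\mathcal A_-([0,1])$ is the space of closed subsets represented by $p\mapsto[0,1]\setminus\bigcup_nB_{p(n)}$ where $(B_n)$ is a standard enumeration of rational open balls (including empty ones). $\mathsf{ConC}_{[0,1]}:\subseteq\mathcal A_-([0,1])\rightrightarrows[0,1]$, $A\mapsto A$, is defined exactly on the nonempty connected closed sets. For $p\in\mathbb{N}^\mathbb{N}$, $p-1$ is the concatenation of $p(0)-1,p(1)-1,\dots$ with $0-1$ the empty word; the completion of $(X,\delta_X)$ is $\overline X=X\cup\{\bot\}$ with $\delta_{\overline X}(p)=\delta_X(p-1)$ if $p-1$ is an infinite sequence in $\mathrm{dom}(\delta_X)$ and $\bot$ otherwise. For $f:\subseteq X\rightrightarrows Y$: $\overline f:\overline X\rightrightarrows\overline Y$ equals $f$ on $\mathrm{dom}(f)$ and $\overline Y$ elsewhere; $\mathsf Tf:X\rightrightarrows Y$ equals $f$ on $\mathrm{dom}(f)$ and $Y$ elsewhere. *)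

theory Defs
  imports "HOL-Analysis.Analysis" "HOL-Library.Nat_Bijection" "HOL-Library.Infinite_Set"
begin

fun prec :: "(nat list \<Rightarrow> nat option) \<Rightarrow> (nat list \<Rightarrow> nat option) \<Rightarrow> nat \<Rightarrow> nat list \<Rightarrow> nat option"
  where
  "prec f g 0 ys = f ys"
| "prec f g (Suc k) ys = (case prec f g k ys of None \<Rightarrow> None | Some r \<Rightarrow> g (k # r # ys))"

definition mu :: "(nat list \<Rightarrow> nat option) \<Rightarrow> nat list \<Rightarrow> nat option" where
  "mu f xs = (if \<exists>n. f (n # xs) = Some 0 \<and> (\<forall>m<n. f (m # xs) \<noteq> None)
              then Some (LEAST n. f (n # xs) = Some 0 \<and> (\<forall>m<n. f (m # xs) \<noteq> None))
              else None)"

inductive partrec :: "nat \<Rightarrow> (nat list \<Rightarrow> nat option) \<Rightarrow> bool" where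
  pr_zero: "partrec n (\<lambda>xs. Some 0)"
| pr_succ: "partrec 1 (\<lambda>xs. Some (Suc (hd xs)))"
| pr_proj: "i < n \<Longrightarrow> partrec n (\<lambda>xs. Some (xs ! i))"
| pr_comp: "partrec m f \<Longrightarrow> length gs = m \<Longrightarrow> (\<forall>g\<in>set gs. partrec n g) \<Longrightarrow>
     partrec n (\<lambda>xs. if (\<forall>g\<in>set gs. g xs \<noteq> None) then f (map (\<lambda>g. the (g xs)) gs) else None)"
| pr_prim: "partrec n f \<Longrightarrow> partrec (Suc (Suc n)) g \<Longrightarrow>
     partrec (Suc n) (\<lambda>xs. prec f g (hd xs) (tl xs))"
| pr_mu: "partrec (Suc n) f \<Longrightarrow> partrec n (mu f)"

type_synonym baire = "nat \<Rightarrow> nat"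

definition prefix_code :: "baire \<Rightarrow> nat \<Rightarrow> nat" where
  "prefix_code p k = list_encode (map p [0..<k])"

text \<open>F is computable iff there is a total recursive g such that for p in dom F,
  the n-th output symbol F(p)(n) is eventually announced as g(n, p[k]) = F(p)(n)+1,
  and g(n, p[k]) is 0 (no answer yet) or the correct answer plus one.\<close>
definition computable :: "(baire \<Rightarrow> baire option) \<Rightarrow> bool" where
  "computable F \<longleftrightarrow> (\<exists>g. partrec 2 g \<and> (\<forall>x y. g [x, y] \<noteq> None) \<and>
     (\<forall>p q. F p = Some q \<longrightarrow> (\<forall>n.
        (\<exists>k. g [n, prefix_code p k] \<noteq> Some 0) \<and>
        (\<forall>k. g [n, prefix_code p k] \<noteq> Some 0 \<longrightarrow> g [n, prefix_code p k] = Some (Suc (q n))))))"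

text \<open>A representation is a partial map delta from Baire space; the represented space is its range.
  A problem is a multi-valued map f with dom f = {x. f x \<noteq> {}}.\<close>

definition rspace :: "(baire \<Rightarrow> 'a option) \<Rightarrow> 'a set" where
  "rspace \<delta> = {x. \<exists>p. \<delta> p = Some x}"

definition realizes :: "(baire \<Rightarrow> 'a option) \<Rightarrow> (baire \<Rightarrow> 'b option) \<Rightarrow> (baire \<Rightarrow> baire option)
    \<Rightarrow> ('a \<Rightarrow> 'b set) \<Rightarrow> bool" where
  "realizes \<delta>X \<delta>Y F f \<longleftrightarrow> (\<forall>p x. \<delta>X p = Some x \<longrightarrow> f x \<noteq> {} \<longrightarrow>
      (\<exists>q y. F p = Some q \<and> \<delta>Y q = Some y \<and> y \<in> f x))"

definition sW_le ::
  "(baire \<Rightarrow> 'a option) \<Rightarrow> (baire \<Rightarrow> 'b option) \<Rightarrow> ('a \<Rightarrow> 'b set) \<Rightarrow>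
   (baire \<Rightarrow> 'c option) \<Rightarrow> (baire \<Rightarrow> 'd option) \<Rightarrow> ('c \<Rightarrow> 'd set) \<Rightarrow> bool" where
  "sW_le \<delta>X \<delta>Y f \<delta>Z \<delta>W g \<longleftrightarrow> (\<exists>H K. computable H \<and> computable K \<and>
     (\<forall>G. realizes \<delta>Z \<delta>W G g \<longrightarrow>
        realizes \<delta>X \<delta>Y (\<lambda>p. Option.bind (K p) (\<lambda>r. Option.bind (G r) H)) f))"

definition sW_eq ::
  "(baire \<Rightarrow> 'a option) \<Rightarrow> (baire \<Rightarrow> 'b option) \<Rightarrow> ('a \<Rightarrow> 'b set) \<Rightarrow>
   (baire \<Rightarrow> 'c option) \<Rightarrow> (baire \<Rightarrow> 'd option) \<Rightarrow> ('c \<Rightarrow> 'd set) \<Rightarrow> bool" where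
  "sW_eq \<delta>X \<delta>Y f \<delta>Z \<delta>W g \<longleftrightarrow> sW_le \<delta>X \<delta>Y f \<delta>Z \<delta>W g \<and> sW_le \<delta>Z \<delta>W g \<delta>X \<delta>Y f"

text \<open>p - 1: drop the zeros of p and subtract one from the remaining entries; it is an
  infinite sequence iff p has infinitely many nonzero entries.\<close>
definition minus_one :: "baire \<Rightarrow> baire" where
  "minus_one p n = p (enumerate {i. 0 < p i} n) - 1"

text \<open>Completion: bottom is None, x is Some x.\<close>
definition compl_rep :: "(baire \<Rightarrow> 'a option) \<Rightarrow> baire \<Rightarrow> 'a option option" where
  "compl_rep \<delta> p = Some (if infinite {i. 0 < p i} then \<delta> (minus_one p) else None)"

definition compl_prob :: "(baire \<Rightarrow> 'a option) \<Rightarrow> (baire \<Rightarrow> 'b option) \<Rightarrow> ('a \<Rightarrow> 'b set)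
    \<Rightarrow> 'a option \<Rightarrow> 'b option set" where
  "compl_prob \<delta>X \<delta>Y f u = (case u of
       Some x \<Rightarrow> (if x \<in> rspace \<delta>X \<and> f x \<noteq> {} then Some ` f x else rspace (compl_rep \<delta>Y))
     | None \<Rightarrow> rspace (compl_rep \<delta>Y))"

definition T_prob :: "(baire \<Rightarrow> 'a option) \<Rightarrow> (baire \<Rightarrow> 'b option) \<Rightarrow> ('a \<Rightarrow> 'b set)
    \<Rightarrow> 'a \<Rightarrow> 'b set" where
  "T_prob \<delta>X \<delta>Y f x = (if x \<in> rspace \<delta>X \<and> f x \<noteq> {} then f x else rspace \<delta>Y)"

definition qnum :: "nat \<Rightarrow> real" where
  "qnum n = real_of_int (int_decode (fst (prod_decode n))) / real (Suc (snd (prod_decode n)))"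

definition delta_I :: "baire \<Rightarrow> real option" where
  "delta_I p = (if (\<forall>n k. n \<le> k \<longrightarrow> \<bar>qnum (p n) - qnum (p k)\<bar> \<le> (1/2) ^ n)
                    \<and> lim (\<lambda>n. qnum (p n)) \<in> {0..1}
                then Some (lim (\<lambda>n. qnum (p n))) else None)"

text \<open>Standard enumeration of rational open balls (radius \<le> 0 gives the empty ball).\<close>
definition rball :: "nat \<Rightarrow> real set" where
  "rball n = ball (qnum (fst (prod_decode n))) (qnum (snd (prod_decode n)))"

definition delta_A :: "baire \<Rightarrow> real set option" where
  "delta_A p = Some ({0..1} - (\<Union>n. rball (p n)))"

definition ConC :: "real set \<Rightarrow> real set" where
  "ConC A = (if A \<noteq> {} \<and> connected A \<and> closed A \<and> A \<subseteq> {0..1} then A else {})"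

end

theory Submission
  imports Defs
begin


definition prc :: "nat \<Rightarrow> (nat list \<Rightarrow> nat) \<Rightarrow> bool" where
  "prc n f \<longleftrightarrow> (\<exists>F. partrec n F \<and> (\<forall>xs. length xs = n \<longrightarrow> F xs = Some (f xs)))"

lemma prc_cong: "prc n f \<Longrightarrow> (\<And>xs. length xs = n \<Longrightarrow> f xs = g xs) \<Longrightarrow> prc n g"
  unfolding prc_def by metis

lemma prc_proj: "i < n \<Longrightarrow> prc n (\<lambda>xs. xs ! i)"
  unfolding prc_def by (rule exI[of _ "\<lambda>xs. Some (xs ! i)"]) (auto intro: pr_proj)

lemma prc_list:
  assumes "\<forall>g\<in>set gs. prc n g"
  shows "\<exists>Gs. length Gs = length gs \<and> (\<forall>G\<in>set Gs. partrec n G) \<and>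
     (\<forall>xs. length xs = n \<longrightarrow> map (\<lambda>G. G xs) Gs = map (\<lambda>g. Some (g xs)) gs)"
  using assms
proof (induction gs)
  case Nil then show ?case by auto
next
  case (Cons g gs)
  then obtain Gs where Gs: "length Gs = length gs" "\<forall>G\<in>set Gs. partrec n G"
     "\<forall>xs. length xs = n \<longrightarrow> map (\<lambda>G. G xs) Gs = map (\<lambda>g. Some (g xs)) gs" by auto
  from Cons.prems obtain G where G: "partrec n G" "\<forall>xs. length xs = n \<longrightarrow> G xs = Some (g xs)"
    unfolding prc_def by auto
  show ?case using Gs G by (intro exI[of _ "G # Gs"]) auto
qed

lemma prc_comp:
  assumes "prc m f" "length gs = m" "\<forall>g\<in>set gs. prc n g"
  shows "prc n (\<lambda>xs. f (map (\<lambda>g. g xs) gs))"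
proof -
  obtain F where F: "partrec m F" "\<forall>xs. length xs = m \<longrightarrow> F xs = Some (f xs)"
    using assms(1) unfolding prc_def by auto
  obtain Gs where Gs: "length Gs = length gs" "\<forall>G\<in>set Gs. partrec n G"
     "\<forall>xs. length xs = n \<longrightarrow> map (\<lambda>G. G xs) Gs = map (\<lambda>g. Some (g xs)) gs"
    using prc_list[OF assms(3)] by auto
  have P: "partrec n (\<lambda>xs. if (\<forall>g\<in>set Gs. g xs \<noteq> None) then F (map (\<lambda>g. the (g xs)) Gs) else None)"
    by (rule pr_comp) (use F Gs assms(2) in auto)
  show ?thesis unfolding prc_def
  proof (intro exI conjI allI impI)
    fix xs :: "nat list" assume l: "length xs = n"
    have e: "map (\<lambda>G. G xs) Gs = map (\<lambda>g. Some (g xs)) gs" using Gs(3) l by auto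
    have a: "\<forall>g\<in>set Gs. g xs \<noteq> None"
    proof
      fix G assume "G \<in> set Gs"
      then have "G xs \<in> set (map (\<lambda>G. G xs) Gs)" by auto
      then show "G xs \<noteq> None" unfolding e by auto
    qed
    have b: "map (\<lambda>g. the (g xs)) Gs = map (\<lambda>g. g xs) gs"
    proof -
      have "map (\<lambda>g. the (g xs)) Gs = map the (map (\<lambda>G. G xs) Gs)" by simp
      also have "\<dots> = map (\<lambda>g. g xs) gs" unfolding e by simp
      finally show ?thesis .
    qed
    show "(if (\<forall>g\<in>set Gs. g xs \<noteq> None) then F (map (\<lambda>g. the (g xs)) Gs) else None) = Some (f (map (\<lambda>g. g xs) gs))"
      using a b F(2) assms(2) by simp
  qed (rule P)
qed

fun nrec :: "(nat list \<Rightarrow> nat) \<Rightarrow> (nat list \<Rightarrow> nat) \<Rightarrow> nat \<Rightarrow> nat list \<Rightarrow> nat" where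
  "nrec f g 0 ys = f ys"
| "nrec f g (Suc k) ys = g (k # nrec f g k ys # ys)"

lemma prc_prec:
  assumes "prc n f" "prc (Suc (Suc n)) g"
  shows "prc (Suc n) (\<lambda>xs. nrec f g (hd xs) (tl xs))"
proof -
  obtain F where F: "partrec n F" "\<forall>xs. length xs = n \<longrightarrow> F xs = Some (f xs)"
    using assms(1) unfolding prc_def by auto
  obtain G where G: "partrec (Suc (Suc n)) G" "\<forall>xs. length xs = Suc (Suc n) \<longrightarrow> G xs = Some (g xs)"
    using assms(2) unfolding prc_def by auto
  have e: "length ys = n \<Longrightarrow> prec F G k ys = Some (nrec f g k ys)" for k ys
    by (induction k) (use F G in auto)
  show ?thesis unfolding prc_def
    by (rule exI[of _ "\<lambda>xs. prec F G (hd xs) (tl xs)"]) (use pr_prim[OF F(1) G(1)] e in auto)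
qed

lemma prc_zero: "prc n (\<lambda>xs. 0)"
  unfolding prc_def by (rule exI[of _ "\<lambda>xs. Some 0"]) (auto intro: pr_zero)

lemma prc_succ: "prc 1 (\<lambda>xs. Suc (hd xs))"
proof -
  have "partrec 1 (\<lambda>xs. Some (Suc (hd xs)))" by (rule pr_succ)
  then show ?thesis unfolding prc_def by blast
qed

lemma prc_comp1: "prc 1 f \<Longrightarrow> prc n a \<Longrightarrow> prc n (\<lambda>xs. f [a xs])"
  using prc_comp[of 1 f "[a]" n] by simp

lemma prc_comp2: "prc 2 f \<Longrightarrow> prc n a \<Longrightarrow> prc n b \<Longrightarrow> prc n (\<lambda>xs. f [a xs, b xs])"
  using prc_comp[of 2 f "[a, b]" n] by simp

lemma prc_comp3: "prc 3 f \<Longrightarrow> prc n a \<Longrightarrow> prc n b \<Longrightarrow> prc n c \<Longrightarrow> prc n (\<lambda>xs. f [a xs, b xs, c xs])"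
  using prc_comp[of 3 f "[a, b, c]" n] by (simp add: numeral_3_eq_3)

lemma prc_const: "prc n (\<lambda>xs. k)"
proof (induction k)
  case 0 then show ?case by (rule prc_zero)
next
  case (Suc k)
  show ?case using prc_comp1[OF prc_succ Suc] by simp
qed

lemma prc_add: "prc 2 (\<lambda>xs. xs ! 0 + xs ! Suc 0)"
proof -
  have A: "prc (Suc (Suc 0)) (\<lambda>xs. nrec (\<lambda>ys. ys ! 0) (\<lambda>ys. Suc (ys ! 1)) (hd xs) (tl xs))"
    by (rule prc_prec) (auto intro: prc_proj prc_comp1[OF prc_succ, simplified])
  have B: "nrec (\<lambda>ys. ys ! 0) (\<lambda>ys. Suc (ys ! 1)) k ys = k + ys ! 0" for k ys
    by (induction k) auto
  have "prc (Suc (Suc 0)) (\<lambda>xs. xs ! 0 + xs ! Suc 0)"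
    by (rule prc_cong[OF A]) (auto simp: length_Suc_conv B[simplified])
  then show ?thesis by (simp add: numeral_2_eq_2)
qed


lemma prc_pred: "prc 1 (\<lambda>xs. hd xs - 1)"
proof -
  have A: "prc (Suc 0) (\<lambda>xs. nrec (\<lambda>ys. 0) (\<lambda>ys. ys ! 0) (hd xs) (tl xs))"
    by (rule prc_prec) (auto intro: prc_proj prc_zero)
  have B: "nrec (\<lambda>ys. 0) (\<lambda>ys. ys ! 0) k ys = k - 1" for k ys by (induction k) auto
  have "prc (Suc 0) (\<lambda>xs. hd xs - 1)" by (rule prc_cong[OF A]) (auto simp: B)
  then show ?thesis by (simp add: One_nat_def)
qed

lemma prc_sub: "prc 2 (\<lambda>xs. xs ! 0 - xs ! Suc 0)"
proof -
  have A: "prc (Suc (Suc 0)) (\<lambda>xs. nrec (\<lambda>ys. ys ! 0) (\<lambda>ys. ys ! Suc 0 - 1) (hd xs) (tl xs))"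
    by (rule prc_prec) (auto intro: prc_proj prc_comp1[OF prc_pred, simplified])
  have B: "nrec (\<lambda>ys. ys ! 0) (\<lambda>ys. ys ! Suc 0 - 1) k ys = ys ! 0 - k" for k ys by (induction k) auto
  have C: "prc (Suc (Suc 0)) (\<lambda>xs. xs ! Suc 0 - xs ! 0)"
    by (rule prc_cong[OF A]) (auto simp: length_Suc_conv B[simplified])
  have D: "prc (Suc (Suc 0)) (\<lambda>xs. xs ! 0 - xs ! Suc 0)"
    using prc_comp2[OF C[folded numeral_2_eq_2], of "Suc (Suc 0)" "\<lambda>xs. xs ! Suc 0" "\<lambda>xs. xs ! 0"]
      prc_proj[of "Suc 0" "Suc (Suc 0)"] prc_proj[of 0 "Suc (Suc 0)"] by simp
  show ?thesis using D by (simp add: numeral_2_eq_2)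
qed

lemma prc_mult: "prc 2 (\<lambda>xs. xs ! 0 * xs ! Suc 0)"
proof -
  have A: "prc (Suc (Suc 0)) (\<lambda>xs. nrec (\<lambda>ys. 0) (\<lambda>ys. ys ! Suc 0 + ys ! Suc (Suc 0)) (hd xs) (tl xs))"
    by (rule prc_prec) (auto intro!: prc_proj prc_zero prc_comp2[OF prc_add, simplified])
  have B: "nrec (\<lambda>ys. 0) (\<lambda>ys. ys ! Suc 0 + ys ! Suc (Suc 0)) k ys = k * ys ! 0" for k ys by (induction k) auto
  have C: "prc (Suc (Suc 0)) (\<lambda>xs. xs ! 0 * xs ! Suc 0)"
    by (rule prc_cong[OF A]) (auto simp: length_Suc_conv B[simplified] numeral_2_eq_2)
  show ?thesis using C by (simp add: numeral_2_eq_2)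
qed

lemma prc_tri: "prc 1 (\<lambda>xs. triangle (hd xs))"
proof -
  have A: "prc (Suc 0) (\<lambda>xs. nrec (\<lambda>ys. 0) (\<lambda>ys. Suc (ys ! 0 + ys ! Suc 0)) (hd xs) (tl xs))"
    by (rule prc_prec) (auto intro!: prc_proj prc_zero prc_comp2[OF prc_add, simplified]
        prc_comp1[OF prc_succ, simplified])
  have B: "nrec (\<lambda>ys. 0) (\<lambda>ys. Suc (ys ! 0 + ys ! Suc 0)) k ys = triangle k" for k ys by (induction k) auto
  have "prc (Suc 0) (\<lambda>xs. triangle (hd xs))" by (rule prc_cong[OF A]) (auto simp: B)
  then show ?thesis by (simp add: One_nat_def)
qed

lemma prc_pe: "prc 2 (\<lambda>xs. prod_encode (xs ! 0, xs ! Suc 0))"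
proof -
  have S: "prc 2 (\<lambda>xs. xs ! 0 + xs ! Suc 0)"
    using prc_comp2[OF prc_add, of 2 "\<lambda>xs. xs ! 0" "\<lambda>xs. xs ! Suc 0"] prc_proj[of 0 2] prc_proj[of "Suc 0" 2]
    by simp
  have T: "prc 2 (\<lambda>xs. triangle (xs ! 0 + xs ! Suc 0))"
    using prc_comp1[OF prc_tri S] by simp
  have A: "prc 2 (\<lambda>xs. triangle (xs ! 0 + xs ! Suc 0) + xs ! 0)"
    using prc_comp2[OF prc_add T prc_proj[of 0 2]] by simp
  show ?thesis by (rule prc_cong[OF A]) (simp add: prod_encode_def)
qed

lemma prc_comp2s: "prc (Suc (Suc 0)) f \<Longrightarrow> prc n a \<Longrightarrow> prc n b \<Longrightarrow> prc n (\<lambda>xs. f [a xs, b xs])"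
  using prc_comp2[of f n a b] by (simp add: numeral_2_eq_2)

lemma prc_hd: "prc n hd" if "0 < n"
  by (rule prc_cong[OF prc_proj[OF that]]) (metis hd_conv_nth length_greater_0_conv that)

definition rc :: "(nat \<Rightarrow> nat) \<Rightarrow> bool" where
  "rc f \<longleftrightarrow> prc 1 (\<lambda>xs. f (hd xs))"

lemma rc_op2: "prc 2 (\<lambda>xs. f (xs ! 0) (xs ! Suc 0)) \<Longrightarrow> rc a \<Longrightarrow> rc b \<Longrightarrow> rc (\<lambda>z. f (a z) (b z))"
  unfolding rc_def using prc_comp2[of "\<lambda>xs. f (xs ! 0) (xs ! Suc 0)" 1 "\<lambda>xs. a (hd xs)" "\<lambda>xs. b (hd xs)"]
  by simp

lemma rc_id: "rc (\<lambda>z. z)"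
  unfolding rc_def by (rule prc_cong[OF prc_proj[of 0 1]]) (auto simp: length_Suc_conv)

lemma rc_const: "rc (\<lambda>z. k)"
  unfolding rc_def by (rule prc_const)

lemma rc_add: "rc a \<Longrightarrow> rc b \<Longrightarrow> rc (\<lambda>z. a z + b z)"
  by (rule rc_op2[OF prc_add])
lemma rc_sub: "rc a \<Longrightarrow> rc b \<Longrightarrow> rc (\<lambda>z. a z - b z)"
  by (rule rc_op2[OF prc_sub])
lemma rc_mult: "rc a \<Longrightarrow> rc b \<Longrightarrow> rc (\<lambda>z. a z * b z)"
  by (rule rc_op2[OF prc_mult])
lemma rc_pair: "rc a \<Longrightarrow> rc b \<Longrightarrow> rc (\<lambda>z. prod_encode (a z, b z))"
  by (rule rc_op2[OF prc_pe])
lemma rc_Suc: "rc a \<Longrightarrow> rc (\<lambda>z. Suc (a z))"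
  using rc_add[OF _ rc_const[of 1]] by simp
lemma rc_tri: "rc a \<Longrightarrow> rc (\<lambda>z. triangle (a z))"
  unfolding rc_def using prc_comp1[OF prc_tri, of 1 "\<lambda>xs. a (hd xs)"] by simp

lemma rc_comp: "rc f \<Longrightarrow> rc a \<Longrightarrow> rc (\<lambda>z. f (a z))"
  unfolding rc_def using prc_comp1[of "\<lambda>xs. f (hd xs)" 1 "\<lambda>xs. a (hd xs)"] by simp

lemma prc_rc: "rc f \<Longrightarrow> prc n a \<Longrightarrow> prc n (\<lambda>xs. f (a xs))"
  unfolding rc_def using prc_comp1[of "\<lambda>xs. f (hd xs)" n a] by simp

fun nr :: "(nat \<Rightarrow> nat) \<Rightarrow> (nat \<Rightarrow> nat \<Rightarrow> nat \<Rightarrow> nat) \<Rightarrow> nat \<Rightarrow> nat \<Rightarrow> nat" where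
  "nr i s 0 x = i x"
| "nr i s (Suc k) x = s k (nr i s k x) x"

lemma rc_nr:
  assumes i: "rc i"
    and s: "rc (\<lambda>w. s (fst (prod_decode w)) (fst (prod_decode (snd (prod_decode w))))
                 (snd (prod_decode (snd (prod_decode w)))))" (is "rc ?S")
    and c: "rc c"
  shows "rc (\<lambda>x. nr i s (c x) x)"
proof -
  have P3: "prc 3 (\<lambda>ys. prod_encode (ys ! 0, prod_encode (ys ! Suc 0, ys ! Suc (Suc 0))))"
    using prc_comp2[OF prc_pe, of 3 "\<lambda>ys. ys ! 0" "\<lambda>ys. prod_encode (ys ! Suc 0, ys ! Suc (Suc 0))"]
      prc_comp2[OF prc_pe, of 3 "\<lambda>ys. ys ! Suc 0" "\<lambda>ys. ys ! Suc (Suc 0)"] prc_proj[of 0 3] prc_proj[of "Suc 0" 3] prc_proj[of "Suc (Suc 0)" 3]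
    by simp
  have G: "prc (Suc (Suc (Suc 0))) (\<lambda>ys. s (ys ! 0) (ys ! Suc 0) (ys ! Suc (Suc 0)))"
    using prc_rc[OF s P3] by (simp add: numeral_3_eq_3)
  have F: "prc (Suc 0) (\<lambda>ys. i (hd ys))" using i unfolding rc_def by simp
  have H: "prc (Suc (Suc 0)) (\<lambda>xs. nrec (\<lambda>ys. i (hd ys)) (\<lambda>ys. s (ys ! 0) (ys ! Suc 0) (ys ! Suc (Suc 0))) (hd xs) (tl xs))"
    by (rule prc_prec[OF F G])
  have E: "nrec (\<lambda>ys. i (hd ys)) (\<lambda>ys. s (ys ! 0) (ys ! Suc 0) (ys ! Suc (Suc 0))) k [x] = nr i s k x" for k x
    by (induction k) auto
  have "prc 1 (\<lambda>xs. nrec (\<lambda>ys. i (hd ys)) (\<lambda>ys. s (ys ! 0) (ys ! Suc 0) (ys ! Suc (Suc 0))) (c (hd xs)) [hd xs])"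
    using prc_comp2s[OF H, of 1 "\<lambda>xs. c (hd xs)" hd] c prc_hd[of 1] by (simp add: rc_def)
  then show ?thesis unfolding rc_def by (simp add: E)
qed

definition rcb :: "(nat \<Rightarrow> bool) \<Rightarrow> bool" where
  "rcb P \<longleftrightarrow> rc (\<lambda>z. if P z then 1 else 0)"

lemma rcb_lt: "rc a \<Longrightarrow> rc b \<Longrightarrow> rcb (\<lambda>z. a z < b z)"
proof -
  assume a: "rc a" and b: "rc b"
  have "rc (\<lambda>z. 1 - (1 - (b z - a z)))" by (intro rc_sub rc_const a b)
  moreover have "(1::nat) - (1 - (y - x)) = (if x < y then 1 else 0)" for x y :: nat by auto
  ultimately show ?thesis unfolding rcb_def by simp
qed

lemma rc_if: "rcb P \<Longrightarrow> rc a \<Longrightarrow> rc b \<Longrightarrow> rc (\<lambda>z. if P z then a z else b z)"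
proof -
  assume P: "rcb P" and a: "rc a" and b: "rc b"
  have "rc (\<lambda>z. (if P z then 1 else 0) * a z + (1 - (if P z then 1 else 0)) * b z)"
    using P unfolding rcb_def by (intro rc_add rc_mult rc_sub rc_const a b)
  moreover have "(\<lambda>z. (if P z then 1 else 0) * a z + (1 - (if P z then 1 else 0)) * b z) = (\<lambda>z. if P z then a z else b z)"
    by auto
  ultimately show ?thesis by simp
qed

lemma rcb_not: "rcb P \<Longrightarrow> rcb (\<lambda>z. \<not> P z)"
proof -
  assume "rcb P"
  then have "rc (\<lambda>z. 1 - (if P z then 1 else 0))" unfolding rcb_def by (intro rc_sub rc_const)
  moreover have "(\<lambda>z. 1 - (if P z then 1 else 0)) = (\<lambda>z. if \<not> P z then 1 else (0::nat))" by auto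
  ultimately show ?thesis unfolding rcb_def by simp
qed

lemma rcb_conj: "rcb P \<Longrightarrow> rcb Q \<Longrightarrow> rcb (\<lambda>z. P z \<and> Q z)"
proof -
  assume "rcb P" "rcb Q"
  then have "rc (\<lambda>z. (if P z then 1 else 0) * (if Q z then 1 else 0))" unfolding rcb_def by (intro rc_mult)
  moreover have "(\<lambda>z. (if P z then 1 else 0) * (if Q z then 1 else 0)) = (\<lambda>z. if P z \<and> Q z then 1 else (0::nat))" by auto
  ultimately show ?thesis unfolding rcb_def by simp
qed

lemma rcb_disj: "rcb P \<Longrightarrow> rcb Q \<Longrightarrow> rcb (\<lambda>z. P z \<or> Q z)"
  using rcb_not[OF rcb_conj[OF rcb_not rcb_not]] by simp

lemma rcb_imp: "rcb P \<Longrightarrow> rcb Q \<Longrightarrow> rcb (\<lambda>z. P z \<longrightarrow> Q z)"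
  using rcb_disj[OF rcb_not] by simp

lemma rcb_const: "rcb (\<lambda>z. c)"
  unfolding rcb_def by (cases c) (auto intro: rc_const)

lemma rcb_le: "rc a \<Longrightarrow> rc b \<Longrightarrow> rcb (\<lambda>z. a z \<le> b z)"
  using rcb_not[OF rcb_lt[of b a]] by (simp add: not_less)

lemma rcb_eq: "rc a \<Longrightarrow> rc b \<Longrightarrow> rcb (\<lambda>z. a z = b z)"
  using rcb_conj[OF rcb_le[of a b] rcb_le[of b a]] by (simp add: eq_iff)

lemma rcb_comp: "rcb P \<Longrightarrow> rc a \<Longrightarrow> rcb (\<lambda>z. P (a z))"
  unfolding rcb_def using rc_comp by fastforce


lemma prcA: "prc n a \<Longrightarrow> prc n b \<Longrightarrow> prc n (\<lambda>xs. a xs + b xs)"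
  using prc_comp2[OF prc_add, of n a b] by simp
lemma prcS: "prc n a \<Longrightarrow> prc n b \<Longrightarrow> prc n (\<lambda>xs. a xs - b xs)"
  using prc_comp2[OF prc_sub, of n a b] by simp
lemma prcT: "prc n a \<Longrightarrow> prc n (\<lambda>xs. triangle (a xs))"
  using prc_comp1[OF prc_tri, of n a] by simp
lemma prcSuc: "prc n a \<Longrightarrow> prc n (\<lambda>xs. Suc (a xs))"
  using prc_comp1[OF prc_succ, of n a] by simp

definition sN :: "nat \<Rightarrow> nat" where
  "sN n = (\<Sum>i<n. (1 - (1 - (Suc n - triangle (Suc i)))))"

lemma sum_ind_lt: "m \<le> n \<Longrightarrow> (\<Sum>i<n. if i < m then 1 else 0) = (m::nat)"
proof (induction n arbitrary: m)
  case 0 then show ?case by simp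
next
  case (Suc n)
  show ?case
  proof (cases "m \<le> n")
    case True then show ?thesis using Suc by simp
  next
    case False
    then have "m = Suc n" using Suc by simp
    then show ?thesis using Suc.IH[of n] by simp
  qed
qed

lemma triangle_mono: "i \<le> j \<Longrightarrow> triangle i \<le> triangle j"
  by (induction j) (auto simp: le_Suc_eq)

lemma triangle_ge: "i \<le> triangle i"
  by (induction i) auto

lemma sN_prop: "triangle (sN n) \<le> n \<and> n < triangle (Suc (sN n))"
proof -
  define m where "m = (LEAST i. n < triangle (Suc i))"
  have ex: "n < triangle (Suc n)" using triangle_ge[of "Suc n"] by simp
  have m1: "n < triangle (Suc m)" unfolding m_def by (rule LeastI[of _ n]) (rule ex)
  have m2: "i < m \<Longrightarrow> triangle (Suc i) \<le> n" for i
    unfolding m_def using not_less_Least by (metis not_less)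
  have mle: "m \<le> n" unfolding m_def by (rule Least_le) (rule ex)
  have iff: "i < n \<Longrightarrow> (triangle (Suc i) \<le> n) = (i < m)" for i
  proof
    assume "triangle (Suc i) \<le> n"
    then show "i < m"
      using m1 triangle_mono[of "Suc m" "Suc i"] by (metis not_le Suc_le_mono le_less_trans nat_le_linear)
  qed (rule m2)
  have "sN n = (\<Sum>i<n. if i < m then 1 else 0)"
    unfolding sN_def by (rule sum.cong) (auto simp: iff[symmetric])
  also have "\<dots> = m" by (rule sum_ind_lt[OF mle])
  finally have "sN n = m" .
  moreover have "triangle m \<le> n"
  proof (cases m)
    case 0 then show ?thesis by simp
  next
    case (Suc k) then show ?thesis using m2[of k] by simp
  qed
  ultimately show ?thesis using m1 by simp
qed

lemma prod_decode_sN: "prod_decode n = (n - triangle (sN n), sN n - (n - triangle (sN n)))"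
proof -
  let ?s = "sN n"
  have a: "triangle ?s \<le> n" and b: "n < triangle (Suc ?s)" using sN_prop[of n] by auto
  have "n = triangle ?s + (n - triangle ?s)" using a by simp
  then have "prod_decode n = prod_decode_aux ?s (n - triangle ?s)"
    by (metis prod_decode_triangle_add)
  also have "\<dots> = (n - triangle ?s, ?s - (n - triangle ?s))"
  proof -
    have c: "n - triangle ?s \<le> ?s" using a b by simp
    show ?thesis using c by (subst prod_decode_aux.simps) simp
  qed
  finally show ?thesis .
qed

lemma prc_sN: "prc 1 (\<lambda>xs. sN (hd xs))"
proof -
  have G: "prc (Suc (Suc (Suc 0))) (\<lambda>ys. ys ! Suc 0 + (1 - (1 - (Suc (ys ! Suc (Suc 0)) - triangle (Suc (ys ! 0))))))"
    by (intro prcA prcS prcSuc prcT prc_proj prc_const) auto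
  have H: "prc (Suc (Suc 0)) (\<lambda>xs. nrec (\<lambda>ys. 0) (\<lambda>ys. ys ! Suc 0 + (1 - (1 - (Suc (ys ! Suc (Suc 0)) - triangle (Suc (ys ! 0)))))) (hd xs) (tl xs))"
    by (rule prc_prec[OF prc_const G])
  have E: "nrec (\<lambda>ys. 0) (\<lambda>ys. ys ! Suc 0 + (1 - (1 - (Suc (ys ! Suc (Suc 0)) - triangle (Suc (ys ! 0)))))) k [x]
     = (\<Sum>i<k. (1 - (1 - (Suc x - triangle (Suc i)))))" for k x
    by (induction k) auto
  have "prc 1 (\<lambda>xs. nrec (\<lambda>ys. 0) (\<lambda>ys. ys ! Suc 0 + (1 - (1 - (Suc (ys ! Suc (Suc 0)) - triangle (Suc (ys ! 0)))))) (hd xs) [hd xs])"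
    using prc_comp2s[OF H, of 1 hd hd] prc_hd[of 1] by simp
  then show ?thesis by (simp only: E sN_def)
qed

lemma rc_sN: "rc sN" unfolding rc_def by (rule prc_sN)

lemma rc_fst: "rc a \<Longrightarrow> rc (\<lambda>z. fst (prod_decode (a z)))"
proof -
  assume a: "rc a"
  have "rc (\<lambda>z. a z - triangle (sN (a z)))"
    by (intro rc_sub rc_tri rc_comp[OF rc_sN] a)
  then show ?thesis by (subst prod_decode_sN) simp
qed

lemma rc_snd: "rc a \<Longrightarrow> rc (\<lambda>z. snd (prod_decode (a z)))"
proof -
  assume a: "rc a"
  have "rc (\<lambda>z. sN (a z) - (a z - triangle (sN (a z))))"
    by (intro rc_sub rc_tri rc_comp[OF rc_sN] a)
  then show ?thesis by (subst prod_decode_sN) simp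
qed

lemma rc_2: "rc (\<lambda>w. f (fst (prod_decode w)) (snd (prod_decode w))) \<Longrightarrow> rc a \<Longrightarrow> rc b \<Longrightarrow> rc (\<lambda>z. f (a z) (b z))"
  using rc_comp[of "\<lambda>w. f (fst (prod_decode w)) (snd (prod_decode w))" "\<lambda>z. prod_encode (a z, b z)"] rc_pair
  by simp

lemma rcb_2: "rcb (\<lambda>w. f (fst (prod_decode w)) (snd (prod_decode w))) \<Longrightarrow> rc a \<Longrightarrow> rc b \<Longrightarrow> rcb (\<lambda>z. f (a z) (b z))"
  unfolding rcb_def by (rule rc_2[where f="\<lambda>x y. if f x y then 1 else 0", simplified])

lemma rc_nr2:
  assumes "rc i" "rc (\<lambda>w. s (fst (prod_decode w)) (fst (prod_decode (snd (prod_decode w))))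
                 (snd (prod_decode (snd (prod_decode w)))))" "rc c"
  shows "rc (\<lambda>x. nr i s (c x) x)"
  using rc_nr assms by blast

lemma rc_sum:
  assumes "rc (\<lambda>w. f (fst (prod_decode w)) (snd (prod_decode w)))" "rc b"
  shows "rc (\<lambda>x. \<Sum>i<b x. f i x)"
proof -
  have E: "nr (\<lambda>x. 0) (\<lambda>k r x. r + f k x) n x = (\<Sum>i<n. f i x)" for n x by (induction n) auto
  have "rc (\<lambda>x. nr (\<lambda>x. 0) (\<lambda>k r x. r + f k x) (b x) x)"
  proof (rule rc_nr[OF rc_const _ assms(2)])
    show "rc (\<lambda>w. fst (prod_decode (snd (prod_decode w))) + f (fst (prod_decode w)) (snd (prod_decode (snd (prod_decode w)))))"
      by (intro rc_add rc_fst rc_snd rc_id rc_2[OF assms(1)])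
  qed
  then show ?thesis by (simp only: E)
qed

lemma rcb_all:
  assumes "rcb (\<lambda>w. P (fst (prod_decode w)) (snd (prod_decode w)))" "rc b"
  shows "rcb (\<lambda>x. \<forall>i<b x. P i x)"
proof -
  have E: "nr (\<lambda>x. 1) (\<lambda>k r x. if P k x then r else 0) n x = (if \<forall>i<n. P i x then 1 else 0)" for n x
    by (induction n) (auto simp: less_Suc_eq)
  have "rc (\<lambda>x. nr (\<lambda>x. 1) (\<lambda>k r x. if P k x then r else 0) (b x) x)"
  proof (rule rc_nr[OF rc_const _ assms(2)])
    show "rc (\<lambda>w. if P (fst (prod_decode w)) (snd (prod_decode (snd (prod_decode w)))) then fst (prod_decode (snd (prod_decode w))) else 0)"
      by (intro rc_if rc_fst rc_snd rc_id rc_const rcb_2[OF assms(1)])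
  qed
  then show ?thesis unfolding rcb_def by (simp only: E)
qed

lemma rcb_ex:
  assumes "rcb (\<lambda>w. P (fst (prod_decode w)) (snd (prod_decode w)))" "rc b"
  shows "rcb (\<lambda>x. \<exists>i<b x. P i x)"
  using rcb_not[OF rcb_all[OF rcb_not[OF assms(1)] assms(2)]] by simp

lemma rc_mod2: "rc a \<Longrightarrow> rc (\<lambda>z. a z mod 2)"
proof -
  assume a: "rc a"
  have E: "nr (\<lambda>x. 0) (\<lambda>k r x. 1 - r) n x = n mod 2" for n x
    by (induction n) (auto simp: mod_Suc)
  have "rc (\<lambda>x. nr (\<lambda>x. 0) (\<lambda>k r x. 1 - r) (a x) x)"
    by (rule rc_nr[OF rc_const _ a]) (intro rc_sub rc_const rc_fst rc_snd rc_id)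
  then show ?thesis by (simp only: E)
qed

lemma rc_div2: "rc a \<Longrightarrow> rc (\<lambda>z. a z div 2)"
proof -
  assume a: "rc a"
  have E: "nr (\<lambda>x. 0) (\<lambda>k r x. r + k mod 2) n x = n div 2" for n x
    by (induction n) (auto simp: div2_Suc_Suc, presburger)
  have "rc (\<lambda>x. nr (\<lambda>x. 0) (\<lambda>k r x. r + k mod 2) (a x) x)"
    by (rule rc_nr[OF rc_const _ a]) (intro rc_add rc_mod2 rc_fst rc_snd rc_id)
  then show ?thesis by (simp only: E)
qed


definition tlc :: "nat \<Rightarrow> nat" where "tlc c = snd (prod_decode (c - 1))"
definition hdc :: "nat \<Rightarrow> nat" where "hdc c = fst (prod_decode (c - 1))"
definition itl :: "nat \<Rightarrow> nat \<Rightarrow> nat" where "itl k c = (tlc ^^ k) c"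
definition nthc :: "nat \<Rightarrow> nat \<Rightarrow> nat" where "nthc c j = hdc (itl j c)"
definition lenc :: "nat \<Rightarrow> nat" where "lenc c = (\<Sum>k<c. if 0 < itl k c then 1 else 0)"

lemma pd0: "prod_decode 0 = (0, 0)"
  using prod_encode_inverse[of "(0, 0)"] by (simp add: prod_encode_def)

lemma itl_enc: "itl k (list_encode xs) = list_encode (drop k xs)"
proof (induction k arbitrary: xs)
  case 0 then show ?case by (simp add: itl_def)
next
  case (Suc k)
  have "itl (Suc k) (list_encode xs) = itl k (tlc (list_encode xs))"
    unfolding itl_def by (simp add: funpow_Suc_right del: funpow.simps)
  also have "tlc (list_encode xs) = list_encode (tl xs)"
    by (cases xs) (auto simp: tlc_def pd0)
  finally show ?case using Suc by (simp add: drop_Suc)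
qed

lemma enc_ge_len: "length xs \<le> list_encode xs"
proof (induction xs)
  case Nil then show ?case by simp
next
  case (Cons x xs) then show ?case using le_prod_encode_2[of "list_encode xs" x] by simp
qed

lemma lenc_enc: "lenc (list_encode xs) = length xs"
proof -
  have "lenc (list_encode xs) = (\<Sum>k<list_encode xs. if k < length xs then 1 else 0)"
    unfolding lenc_def
  proof (rule sum.cong)
    fix k
    have "(0 < list_encode (drop k xs)) = (drop k xs \<noteq> [])"
      by (cases "drop k xs") auto
    then show "(if 0 < itl k (list_encode xs) then 1 else 0) = (if k < length xs then 1 else (0::nat))"
      by (simp add: itl_enc)
  qed simp
  also have "\<dots> = length xs" by (rule sum_ind_lt[OF enc_ge_len])
  finally show ?thesis .
qed

lemma nthc_enc: "j < length xs \<Longrightarrow> nthc (list_encode xs) j = xs ! j"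
proof -
  assume j: "j < length xs"
  have "drop j xs = xs ! j # drop (Suc j) xs" using j by (rule Cons_nth_drop_Suc[symmetric])
  then show ?thesis unfolding nthc_def hdc_def by (simp add: itl_enc)
qed

lemma lenc_prefix: "lenc (prefix_code p k) = k"
  unfolding prefix_code_def by (simp add: lenc_enc)

lemma nthc_prefix: "j < k \<Longrightarrow> nthc (prefix_code p k) j = p j"
  unfolding prefix_code_def by (simp add: nthc_enc)

lemma rc_tlc: "rc a \<Longrightarrow> rc (\<lambda>z. tlc (a z))"
  unfolding tlc_def by (intro rc_snd rc_sub rc_const)
lemma rc_hdc: "rc a \<Longrightarrow> rc (\<lambda>z. hdc (a z))"
  unfolding hdc_def by (intro rc_fst rc_sub rc_const)

lemma rc_itl: "rc a \<Longrightarrow> rc b \<Longrightarrow> rc (\<lambda>z. itl (a z) (b z))"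
proof -
  assume a: "rc a" and b: "rc b"
  have E: "nr (\<lambda>w. snd (prod_decode w)) (\<lambda>k r x. tlc r) n w = itl n (snd (prod_decode w))" for n w
    by (induction n) (auto simp: itl_def)
  have "rc (\<lambda>w. nr (\<lambda>w. snd (prod_decode w)) (\<lambda>k r x. tlc r) (fst (prod_decode w)) w)"
    by (rule rc_nr) (intro rc_snd rc_fst rc_tlc rc_id)+
  then have "rc (\<lambda>w. itl (fst (prod_decode w)) (snd (prod_decode w)))" by (simp only: E)
  then show ?thesis by (rule rc_2[OF _ a b])
qed

lemma rc_nthc: "rc a \<Longrightarrow> rc b \<Longrightarrow> rc (\<lambda>z. nthc (a z) (b z))"
  unfolding nthc_def by (intro rc_hdc rc_itl)

lemma rc_lenc: "rc a \<Longrightarrow> rc (\<lambda>z. lenc (a z))"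
proof -
  assume a: "rc a"
  have "rc (\<lambda>x. \<Sum>k<a x. if 0 < itl k (a x) then 1 else 0)"
    by (intro rc_sum rc_if rcb_lt rc_itl rc_fst rc_snd rc_const rc_id rc_comp[OF a] a)
  then show ?thesis unfolding lenc_def .
qed

section \<open>Rational points\<close>

definition Np :: "nat \<Rightarrow> nat" where "Np a = (if a mod 2 = 0 then a div 2 else 0)"
definition Nn :: "nat \<Rightarrow> nat" where "Nn a = (if a mod 2 = 0 then 0 else a div 2 + 1)"

lemma int_decode_Np: "int_decode a = int (Np a) - int (Nn a)"
  by (simp add: int_decode_def sum_decode_def Np_def Nn_def even_iff_mod_2_eq_zero)

definition pval :: "nat \<Rightarrow> nat \<Rightarrow> real" where
  "pval k s = qnum (fst (prod_decode k)) + (if s = 0 then - qnum (snd (prod_decode k)) else qnum (snd (prod_decode k)))"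

definition PP :: "nat \<Rightarrow> nat \<Rightarrow> nat" where
  "PP k s = Np (fst (prod_decode (fst (prod_decode k)))) * Suc (snd (prod_decode (snd (prod_decode k))))
    + (if s = 0 then Nn (fst (prod_decode (snd (prod_decode k)))) else Np (fst (prod_decode (snd (prod_decode k)))))
       * Suc (snd (prod_decode (fst (prod_decode k))))"
definition NN :: "nat \<Rightarrow> nat \<Rightarrow> nat" where
  "NN k s = Nn (fst (prod_decode (fst (prod_decode k)))) * Suc (snd (prod_decode (snd (prod_decode k))))
    + (if s = 0 then Np (fst (prod_decode (snd (prod_decode k)))) else Nn (fst (prod_decode (snd (prod_decode k)))))
       * Suc (snd (prod_decode (fst (prod_decode k))))"
definition DD :: "nat \<Rightarrow> nat" where
  "DD k = Suc (snd (prod_decode (fst (prod_decode k)))) * Suc (snd (prod_decode (snd (prod_decode k))))"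

lemma pval_PP: "pval k s = (real (PP k s) - real (NN k s)) / real (DD k)"
proof -
  obtain u v where k: "prod_decode k = (u, v)" by fastforce
  obtain a b where u: "prod_decode u = (a, b)" by fastforce
  obtain c d where v: "prod_decode v = (c, d)" by fastforce
  have q1: "qnum u = (real (Np a) - real (Nn a)) / real (Suc b)"
    unfolding qnum_def using u by (simp add: int_decode_Np)
  have q2: "qnum v = (real (Np c) - real (Nn c)) / real (Suc d)"
    unfolding qnum_def using v by (simp add: int_decode_Np)
  show ?thesis
    unfolding pval_def PP_def NN_def DD_def k u v fst_conv snd_conv q1 q2
    by (cases "s = 0") (simp_all add: field_simps)
qed

definition ltq :: "nat \<Rightarrow> nat \<Rightarrow> nat \<Rightarrow> nat \<Rightarrow> bool" where
  "ltq k1 s1 k2 s2 \<longleftrightarrow> PP k1 s1 * DD k2 + NN k2 s2 * DD k1 < PP k2 s2 * DD k1 + NN k1 s1 * DD k2"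

lemma ltq_iff: "ltq k1 s1 k2 s2 \<longleftrightarrow> pval k1 s1 < pval k2 s2"
proof -
  have "DD k1 > 0" "DD k2 > 0" by (simp_all add: DD_def)
  then have d1: "real (DD k1) > 0" and d2: "real (DD k2) > 0" by simp_all
  have "pval k1 s1 < pval k2 s2 \<longleftrightarrow>
     (real (PP k1 s1) - real (NN k1 s1)) * real (DD k2) < (real (PP k2 s2) - real (NN k2 s2)) * real (DD k1)"
    unfolding pval_PP using d1 d2 by (simp add: divide_less_eq less_divide_eq)
  also have "\<dots> \<longleftrightarrow> real (PP k1 s1 * DD k2 + NN k2 s2 * DD k1) < real (PP k2 s2 * DD k1 + NN k1 s1 * DD k2)"
    by (simp add: algebra_simps)
  finally show ?thesis unfolding ltq_def by linarith
qed

lemma rc_Np: "rc a \<Longrightarrow> rc (\<lambda>z. Np (a z))"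
  unfolding Np_def by (intro rc_if rcb_eq rc_mod2 rc_div2 rc_const)
lemma rc_Nn: "rc a \<Longrightarrow> rc (\<lambda>z. Nn (a z))"
  unfolding Nn_def by (intro rc_if rcb_eq rc_mod2 rc_div2 rc_const rc_add)

lemma rc_PP: "rc a \<Longrightarrow> rc b \<Longrightarrow> rc (\<lambda>z. PP (a z) (b z))"
  unfolding PP_def by (intro rc_add rc_mult rc_if rcb_eq rc_Np rc_Nn rc_Suc rc_fst rc_snd rc_const)
lemma rc_NN: "rc a \<Longrightarrow> rc b \<Longrightarrow> rc (\<lambda>z. NN (a z) (b z))"
  unfolding NN_def by (intro rc_add rc_mult rc_if rcb_eq rc_Np rc_Nn rc_Suc rc_fst rc_snd rc_const)
lemma rc_DD: "rc a \<Longrightarrow> rc (\<lambda>z. DD (a z))"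
  unfolding DD_def by (intro rc_mult rc_Suc rc_fst rc_snd)

lemma rcb_ltq: "rc a \<Longrightarrow> rc b \<Longrightarrow> rc c \<Longrightarrow> rc d \<Longrightarrow> rcb (\<lambda>z. ltq (a z) (b z) (c z) (d z))"
  unfolding ltq_def by (intro rcb_lt rc_add rc_mult rc_PP rc_NN rc_DD)


definition memC :: "(nat \<Rightarrow> nat) \<Rightarrow> nat \<Rightarrow> nat \<Rightarrow> nat \<Rightarrow> bool" where
  "memC e t k s \<longleftrightarrow> (\<exists>j<t. ltq (e j) 0 k s \<and> ltq k s (e j) 1)"
definition leftcov :: "(nat \<Rightarrow> nat) \<Rightarrow> nat \<Rightarrow> nat \<Rightarrow> nat \<Rightarrow> bool" where
  "leftcov e t k s \<longleftrightarrow> (ltq 0 1 k s \<longrightarrow> memC e t 0 1) \<and>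
      (\<forall>i<t. \<not> ltq (e i) 1 0 1 \<and> ltq (e i) 1 k s \<longrightarrow> memC e t (e i) 1)"
definition rightcov :: "(nat \<Rightarrow> nat) \<Rightarrow> nat \<Rightarrow> nat \<Rightarrow> nat \<Rightarrow> bool" where
  "rightcov e t k s \<longleftrightarrow> (ltq k s 20 1 \<longrightarrow> memC e t 20 1) \<and>
      (\<forall>i<t. ltq k s (e i) 0 \<and> \<not> ltq 20 1 (e i) 0 \<longrightarrow> memC e t (e i) 0)"
definition valid :: "(nat \<Rightarrow> nat) \<Rightarrow> nat \<Rightarrow> bool" where
  "valid e t \<longleftrightarrow> \<not> (leftcov e t 20 1 \<and> memC e t 20 1)"
definition outb :: "(nat \<Rightarrow> nat) \<Rightarrow> nat \<Rightarrow> nat \<Rightarrow> bool" where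
  "outb e t j \<longleftrightarrow> valid e t \<and> j < t \<and> (leftcov e t (e j) 1 \<or> rightcov e t (e j) 0)"
definition outv :: "(nat \<Rightarrow> nat) \<Rightarrow> nat \<Rightarrow> nat" where
  "outv e n = (if outb e (snd (prod_decode n)) (fst (prod_decode n)) then e (fst (prod_decode n)) else 0)"

definition gphi :: "nat \<Rightarrow> nat \<Rightarrow> nat \<Rightarrow> nat" where
  "gphi fl n c = (if snd (prod_decode n) \<le> lenc c then Suc (fl + outv (\<lambda>j. nthc c j + fl - 1) n) else 0)"

lemma rcb_memC:
  assumes E: "rc (\<lambda>w. E (fst (prod_decode w)) (snd (prod_decode w)))" and T: "rc T" and K: "rc K" and S: "rc S"
  shows "rcb (\<lambda>z. memC (\<lambda>j. E j z) (T z) (K z) (S z))"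
  unfolding memC_def
  by (intro rcb_ex rcb_conj rcb_ltq rc_2[OF E] rc_comp[OF K] rc_comp[OF S] rc_const rc_fst rc_snd rc_id T)

lemma rcb_leftcov:
  assumes E: "rc (\<lambda>w. E (fst (prod_decode w)) (snd (prod_decode w)))" and T: "rc T" and K: "rc K" and S: "rc S"
  shows "rcb (\<lambda>z. leftcov (\<lambda>j. E j z) (T z) (K z) (S z))"
  unfolding leftcov_def
  by (intro rcb_all rcb_conj rcb_imp rcb_not rcb_ltq rcb_memC rc_2[OF E] rc_comp[OF K] rc_comp[OF S] rc_comp[OF T]
      rc_const rc_fst rc_snd rc_id T K S)

lemma rcb_rightcov:
  assumes E: "rc (\<lambda>w. E (fst (prod_decode w)) (snd (prod_decode w)))" and T: "rc T" and K: "rc K" and S: "rc S"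
  shows "rcb (\<lambda>z. rightcov (\<lambda>j. E j z) (T z) (K z) (S z))"
  unfolding rightcov_def
  by (intro rcb_all rcb_conj rcb_imp rcb_not rcb_ltq rcb_memC rc_2[OF E] rc_comp[OF K] rc_comp[OF S] rc_comp[OF T]
      rc_const rc_fst rc_snd rc_id T K S)

lemma rcb_outb:
  assumes E: "rc (\<lambda>w. E (fst (prod_decode w)) (snd (prod_decode w)))" and T: "rc T" and J: "rc J"
  shows "rcb (\<lambda>z. outb (\<lambda>j. E j z) (T z) (J z))"
  unfolding outb_def valid_def
  by (intro rcb_conj rcb_disj rcb_not rcb_lt rcb_leftcov rcb_rightcov rcb_memC rc_2[OF E] rc_const rc_fst rc_snd rc_id T J)

lemma rc_outv:
  assumes E: "rc (\<lambda>w. E (fst (prod_decode w)) (snd (prod_decode w)))" and N: "rc N"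
  shows "rc (\<lambda>z. outv (\<lambda>j. E j z) (N z))"
  unfolding outv_def
  by (intro rc_if rcb_outb rc_2[OF E] rc_const rc_fst rc_snd rc_id N)

lemma rc_gphi: "rc (\<lambda>w. gphi fl (fst (prod_decode w)) (snd (prod_decode w)))"
proof -
  have E: "rc (\<lambda>w. nthc (snd (prod_decode (snd (prod_decode w)))) (fst (prod_decode w)) + fl - 1)"
    by (intro rc_sub rc_add rc_nthc rc_fst rc_snd rc_const rc_id)
  show ?thesis unfolding gphi_def
    by (intro rc_if rcb_le rc_Suc rc_add rc_outv[OF E] rc_lenc rc_const rc_fst rc_snd rc_id)
qed


lemma cover_left:
  fixes lo hi :: "nat \<Rightarrow> real" and t :: nat and h :: real
  defines "U \<equiv> (\<Union>i<t. {lo i<..<hi i})"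
  shows "{0..<h} \<subseteq> U \<longleftrightarrow> (0 < h \<longrightarrow> 0 \<in> U) \<and> (\<forall>i<t. 0 \<le> hi i \<and> hi i < h \<longrightarrow> hi i \<in> U)"
proof
  assume "{0..<h} \<subseteq> U" then show "(0 < h \<longrightarrow> 0 \<in> U) \<and> (\<forall>i<t. 0 \<le> hi i \<and> hi i < h \<longrightarrow> hi i \<in> U)"
    by auto
next
  assume H: "(0 < h \<longrightarrow> 0 \<in> U) \<and> (\<forall>i<t. 0 \<le> hi i \<and> hi i < h \<longrightarrow> hi i \<in> U)"
  have oU: "open U" unfolding U_def by auto
  show "{0..<h} \<subseteq> U"
  proof (rule ccontr)
    assume "\<not> {0..<h} \<subseteq> U"
    then obtain z where z0: "z \<in> {0..<h}" "z \<notin> U" by blast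
    then have z: "0 \<le> z" "z < h" "z \<notin> U" by auto
    define S where "S = {0..z} - U"
    have Sne: "S \<noteq> {}" using z unfolding S_def by auto
    have Sb: "bdd_below S" unfolding S_def by (auto intro: bdd_belowI[of _ 0])
    have Sc: "closed S" unfolding S_def using oU by (intro closed_Diff) auto
    define m where "m = Inf S"
    have mS: "m \<in> S" unfolding m_def by (rule closed_contains_Inf[OF Sne Sb Sc])
    then have m: "0 \<le> m" "m \<le> z" "m \<notin> U" unfolding S_def by auto
    have below: "y \<in> U" if "0 \<le> y" "y < m" for y
    proof (rule ccontr)
      assume "y \<notin> U"
      then have "y \<in> S" using that m unfolding S_def by auto
      then have "m \<le> y" unfolding m_def by (rule cInf_lower[OF _ Sb])
      then show False using that by simp
    qed
    show False
    proof (cases "m = 0")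
      case True
      then show ?thesis using H z m by auto
    next
      case False
      then have mpos: "0 < m" using m by simp
      have "\<exists>i<t. hi i = m"
      proof (rule ccontr)
        assume nh: "\<not> (\<exists>i<t. hi i = m)"
        define F where "F = insert 0 {hi i |i. i < t \<and> hi i < m}"
        have fF: "finite F" unfolding F_def by auto
        define a where "a = Max F"
        have aF: "a \<in> F" unfolding a_def by (rule Max_in[OF fF]) (simp add: F_def)
        have am: "a < m" using aF mpos unfolding F_def by auto
        have a0: "0 \<le> a" unfolding a_def by (rule Max_ge[OF fF]) (simp add: F_def)
        have Fa: "hi i \<le> a" if "i < t" "hi i < m" for i
          unfolding a_def by (rule Max_ge[OF fF]) (use that in \<open>auto simp: F_def\<close>)
        define y where "y = (a + m) / 2"
        have y: "a < y" "y < m" using am unfolding y_def by auto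
        then have "y \<in> U" using below a0 by auto
        then obtain i where i: "i < t" "lo i < y" "y < hi i" unfolding U_def by auto
        show False
        proof (cases "hi i < m")
          case True then show ?thesis using Fa[OF i(1)] i y by auto
        next
          case False
          then have "m < hi i" using nh i(1) by force
          then have "lo i < m" "m < hi i" using i y by auto
          then have "m \<in> U" unfolding U_def using i(1) by auto
          then show ?thesis using m by auto
        qed
      qed
      then obtain i where i: "i < t" "hi i = m" by auto
      then have "hi i \<in> U" using H m z by auto
      then show ?thesis using i m by auto
    qed
  qed
qed

lemma cover_right:
  fixes lo hi :: "nat \<Rightarrow> real" and t :: nat and l :: real
  defines "U \<equiv> (\<Union>i<t. {lo i<..<hi i})"
  shows "{l<..1} \<subseteq> U \<longleftrightarrow> (l < 1 \<longrightarrow> 1 \<in> U) \<and> (\<forall>i<t. l < lo i \<and> lo i \<le> 1 \<longrightarrow> lo i \<in> U)"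
proof -
  define U' where "U' = (\<Union>i<t. {(\<lambda>i. 1 - hi i) i<..<(\<lambda>i. 1 - lo i) i})"
  have mem: "x \<in> U \<longleftrightarrow> 1 - x \<in> U'" for x unfolding U_def U'_def by auto
  have L: "{0..<1 - l} \<subseteq> U' \<longleftrightarrow> (0 < 1 - l \<longrightarrow> 0 \<in> U') \<and> (\<forall>i<t. 0 \<le> 1 - lo i \<and> 1 - lo i < 1 - l \<longrightarrow> 1 - lo i \<in> U')"
    unfolding U'_def by (rule cover_left)
  have "{l<..1} \<subseteq> U \<longleftrightarrow> {0..<1 - l} \<subseteq> U'"
  proof
    assume a: "{l<..1} \<subseteq> U"
    show "{0..<1 - l} \<subseteq> U'"
    proof
      fix x assume "x \<in> {0..<1 - l}"
      then have "1 - x \<in> U" using a by auto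
      then show "x \<in> U'" using mem[of "1 - x"] by simp
    qed
  next
    assume a: "{0..<1 - l} \<subseteq> U'"
    show "{l<..1} \<subseteq> U"
    proof
      fix x assume "x \<in> {l<..1}"
      then have "1 - x \<in> U'" using a by auto
      then show "x \<in> U" using mem by simp
    qed
  qed
  also have "\<dots> \<longleftrightarrow> (l < 1 \<longrightarrow> 1 \<in> U) \<and> (\<forall>i<t. l < lo i \<and> lo i \<le> 1 \<longrightarrow> lo i \<in> U)"
    unfolding L using mem by auto
  finally show ?thesis .
qed


lemma rball_eq: "rball k = {pval k 0<..<pval k 1}"
  unfolding rball_def pval_def by (auto simp: ball_def dist_real_def abs_less_iff)

lemma rball_0: "rball 0 = {}"
  unfolding rball_def by (simp add: pd0 qnum_def int_decode_def sum_decode_def)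

lemma pval_0: "pval 0 1 = 0"
  unfolding pval_def by (simp add: pd0 qnum_def int_decode_def sum_decode_def)

lemma pval_20: "pval 20 1 = 1"
proof -
  have e20: "prod_encode (5, 0) = 20" by (simp add: prod_encode_def triangle_def)
  have e5: "prod_encode (2, 0) = 5" by (simp add: prod_encode_def triangle_def)
  have a: "prod_decode 20 = (5, 0)"
    using prod_encode_inverse[of "(5, 0)"] unfolding e20 .
  have b: "prod_decode 5 = (2, 0)"
    using prod_encode_inverse[of "(2, 0)"] unfolding e5 .
  show ?thesis unfolding pval_def a b
    by (simp add: qnum_def b pd0 int_decode_def sum_decode_def)
qed

definition lo :: "(nat \<Rightarrow> nat) \<Rightarrow> nat \<Rightarrow> real" where "lo e j = pval (e j) 0"
definition hi :: "(nat \<Rightarrow> nat) \<Rightarrow> nat \<Rightarrow> real" where "hi e j = pval (e j) 1"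
definition Ct :: "(nat \<Rightarrow> nat) \<Rightarrow> nat \<Rightarrow> real set" where "Ct e t = (\<Union>j<t. rball (e j))"

lemma rball_e: "rball (e j) = {lo e j<..<hi e j}"
  unfolding lo_def hi_def by (rule rball_eq)

lemma Ct_eq: "Ct e t = (\<Union>i<t. {lo e i<..<hi e i})"
  unfolding Ct_def rball_e ..

lemma memC_iff: "memC e t k s \<longleftrightarrow> pval k s \<in> Ct e t"
  unfolding memC_def Ct_def rball_eq ltq_iff by auto

lemma leftcov_iff: "leftcov e t k s \<longleftrightarrow> {0..<pval k s} \<subseteq> Ct e t"
proof -
  have "{0..<pval k s} \<subseteq> Ct e t \<longleftrightarrow> (0 < pval k s \<longrightarrow> 0 \<in> Ct e t) \<and>
      (\<forall>i<t. 0 \<le> hi e i \<and> hi e i < pval k s \<longrightarrow> hi e i \<in> Ct e t)"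
    unfolding Ct_eq by (rule cover_left)
  then show ?thesis unfolding leftcov_def memC_iff ltq_iff pval_0 hi_def by (auto simp: not_less)
qed

lemma rightcov_iff: "rightcov e t k s \<longleftrightarrow> {pval k s<..1} \<subseteq> Ct e t"
proof -
  have "{pval k s<..1} \<subseteq> Ct e t \<longleftrightarrow> (pval k s < 1 \<longrightarrow> 1 \<in> Ct e t) \<and>
      (\<forall>i<t. pval k s < lo e i \<and> lo e i \<le> 1 \<longrightarrow> lo e i \<in> Ct e t)"
    unfolding Ct_eq by (rule cover_right)
  then show ?thesis unfolding rightcov_def memC_iff ltq_iff pval_20 lo_def by (auto simp: not_less)
qed

lemma valid_iff: "valid e t \<longleftrightarrow> \<not> {0..1} \<subseteq> Ct e t"
proof -
  have "{0..1} \<subseteq> Ct e t \<longleftrightarrow> {0..<1} \<subseteq> Ct e t \<and> (1::real) \<in> Ct e t"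
    by (auto simp: subset_eq)
  then show ?thesis unfolding valid_def leftcov_iff memC_iff pval_20 by simp
qed

lemma outb_iff: "outb e t j \<longleftrightarrow> \<not> {0..1} \<subseteq> Ct e t \<and> j < t \<and>
    ({0..<hi e j} \<subseteq> Ct e t \<or> {lo e j<..1} \<subseteq> Ct e t)"
  unfolding outb_def valid_iff leftcov_iff rightcov_iff lo_def hi_def ..

lemma Ct_mono: "t \<le> t' \<Longrightarrow> Ct e t \<subseteq> Ct e t'"
  unfolding Ct_def by (rule UN_mono) auto

lemma outb_sub: "outb e t j \<Longrightarrow> rball (e j) \<subseteq> Ct e t"
  unfolding outb_iff Ct_def by auto

lemma outb_mono: "outb e t j \<Longrightarrow> t \<le> t' \<Longrightarrow> \<not> {0..1} \<subseteq> Ct e t' \<Longrightarrow> outb e t' j"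
  unfolding outb_iff using Ct_mono[of t t' e] by auto

definition Oset :: "(nat \<Rightarrow> nat) \<Rightarrow> real set" where
  "Oset e = (\<Union>p\<in>{p. outb e (fst p) (snd p)}. rball (e (snd p)))"
definition Bset :: "(nat \<Rightarrow> nat) \<Rightarrow> real set" where
  "Bset e = {0..1} - Oset e"

lemma Oset_iff: "x \<in> Oset e \<longleftrightarrow> (\<exists>t j. outb e t j \<and> x \<in> rball (e j))"
  unfolding Oset_def by auto

lemma outv_union: "(\<Union>n. rball (outv e n)) = Oset e"
proof (rule set_eqI)
  fix x
  show "x \<in> (\<Union>n. rball (outv e n)) \<longleftrightarrow> x \<in> Oset e"
  proof
    assume "x \<in> (\<Union>n. rball (outv e n))"
    then obtain n where "x \<in> rball (outv e n)" by auto
    then show "x \<in> Oset e" unfolding outv_def Oset_iff by (auto simp: rball_0 split: if_splits)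
  next
    assume "x \<in> Oset e"
    then obtain t j where "outb e t j" "x \<in> rball (e j)" unfolding Oset_iff by auto
    then have "x \<in> rball (outv e (prod_encode (j, t)))" unfolding outv_def by simp
    then show "x \<in> (\<Union>n. rball (outv e n))" by auto
  qed
qed

lemma open_Oset: "open (Oset e)"
  unfolding Oset_def rball_def by (intro open_UN) auto

lemma Bset_closed: "closed (Bset e)"
  unfolding Bset_def using open_Oset by (intro closed_Diff) auto

lemma Bset_connected: "connected (Bset e)"
  unfolding connected_iff_interval
proof (intro ballI allI impI)
  fix x z y assume xB: "x \<in> Bset e" and zB: "z \<in> Bset e" and xy: "x \<le> y" and yz: "y \<le> z"
  show "y \<in> Bset e"
  proof (rule ccontr)
    assume yB: "y \<notin> Bset e"
    have y01: "y \<in> {0..1}" using xB zB xy yz unfolding Bset_def by auto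
    then have "y \<in> Oset e" using yB unfolding Bset_def by auto
    then obtain t j where o: "outb e t j" and yj: "y \<in> rball (e j)" unfolding Oset_iff by blast
    have yj': "lo e j < y" "y < hi e j" using yj unfolding rball_e by auto
    from o have v: "\<not> {0..1} \<subseteq> Ct e t" and jt: "j < t"
      and cov: "{0..<hi e j} \<subseteq> Ct e t \<or> {lo e j<..1} \<subseteq> Ct e t" unfolding outb_iff by auto
    from cov show False
    proof
      assume L: "{0..<hi e j} \<subseteq> Ct e t"
      have x0: "0 \<le> x" using xB unfolding Bset_def by auto
      have "x \<in> Ct e t" using L x0 xy yj' by auto
      then obtain i where it: "i < t" and xi: "x \<in> rball (e i)" unfolding Ct_def by auto
      have xi': "lo e i < x" "x < hi e i" using xi unfolding rball_e by auto
      have "{0..<hi e i} \<subseteq> Ct e t"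
      proof
        fix w assume w: "w \<in> {0..<hi e i}"
        show "w \<in> Ct e t"
        proof (cases "w < hi e j")
          case True then show ?thesis using L w by auto
        next
          case False
          then have "w \<in> rball (e i)" unfolding rball_e using w xi' xy yj' by auto
          then show ?thesis unfolding Ct_def using it by auto
        qed
      qed
      then have "outb e t i" unfolding outb_iff using v it by auto
      then have "x \<in> Oset e" unfolding Oset_iff using xi by auto
      then show False using xB unfolding Bset_def by auto
    next
      assume R: "{lo e j<..1} \<subseteq> Ct e t"
      have z1: "z \<le> 1" using zB unfolding Bset_def by auto
      have "z \<in> Ct e t" using R z1 yz yj' by auto
      then obtain i where it: "i < t" and zi: "z \<in> rball (e i)" unfolding Ct_def by auto
      have zi': "lo e i < z" "z < hi e i" using zi unfolding rball_e by auto
      have "{lo e i<..1} \<subseteq> Ct e t"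
      proof
        fix w assume w: "w \<in> {lo e i<..1}"
        show "w \<in> Ct e t"
        proof (cases "lo e j < w")
          case True then show ?thesis using R w by auto
        next
          case False
          then have "w \<in> rball (e i)" unfolding rball_e using w zi' yz yj' by auto
          then show ?thesis unfolding Ct_def using it by auto
        qed
      qed
      then have "outb e t i" unfolding outb_iff using v it by auto
      then have "z \<in> Oset e" unfolding Oset_iff using zi by auto
      then show False using zB unfolding Bset_def by auto
    qed
  qed
qed

lemma Bset_nonempty: "Bset e \<noteq> {}"
proof -
  define F where "F t = {0..1} - (\<Union>p\<in>{p. fst p \<le> t \<and> outb e (fst p) (snd p)}. rball (e (snd p)))" for t
  have cF: "compact (F t)" for t
  proof -
    have "open (\<Union>p\<in>{p. fst p \<le> t \<and> outb e (fst p) (snd p)}. rball (e (snd p)))"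
      unfolding rball_def by (intro open_UN) auto
    then have "closed (F t)" unfolding F_def by (intro closed_Diff) auto
    moreover have "bounded (F t)" unfolding F_def by (rule bounded_subset[of "{0..1}"]) auto
    ultimately show ?thesis by (simp add: compact_eq_bounded_closed)
  qed
  have neF: "F t \<noteq> {}" for t
  proof -
    define V where "V = {t'. t' \<le> t \<and> \<not> {0..1} \<subseteq> Ct e t'}"
    have "0 \<in> V" unfolding V_def Ct_def by auto
    moreover have fV: "finite V" unfolding V_def by auto
    ultimately have sV: "Max V \<in> V" by (intro Max_in) auto
    define s where "s = Max V"
    from sV have "\<not> {0..1} \<subseteq> Ct e s" unfolding V_def s_def by auto
    then obtain x where x: "x \<in> {0..1}" "x \<notin> Ct e s" by blast
    have "x \<in> F t"
    proof -
      have "x \<notin> rball (e j)" if "t' \<le> t" "outb e t' j" for t' j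
      proof -
        have "t' \<in> V" using that unfolding V_def outb_iff by auto
        then have "t' \<le> s" unfolding s_def using fV by auto
        then have "rball (e j) \<subseteq> Ct e s" using outb_sub[OF that(2)] Ct_mono[of t' s e] by auto
        then show ?thesis using x by auto
      qed
      then show ?thesis unfolding F_def using x by auto
    qed
    then show ?thesis by auto
  qed
  have decF: "m \<le> n \<Longrightarrow> F n \<subseteq> F m" for m n unfolding F_def by (intro Diff_mono subset_refl UN_mono) auto
  have "\<Inter> (range F) \<noteq> {}" by (rule compact_nest[OF cF neF decF])
  moreover have "\<Inter> (range F) \<subseteq> Bset e"
  proof
    fix x assume "x \<in> \<Inter> (range F)"
    then have xF: "x \<in> F t" for t by auto
    have "x \<in> {0..1}" using xF[of 0] unfolding F_def by auto
    moreover have "x \<notin> Oset e"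
    proof
      assume "x \<in> Oset e"
      then obtain t j where tj: "outb e t j" "x \<in> rball (e j)" unfolding Oset_iff by blast
      then have "x \<notin> F t" unfolding F_def by auto
      then show False using xF by auto
    qed
    ultimately show "x \<in> Bset e" unfolding Bset_def by auto
  qed
  ultimately show ?thesis by auto
qed


lemma finite_cover:
  assumes "compact K" "K \<subseteq> (\<Union>j. rball (e j))"
  shows "\<exists>t. K \<subseteq> Ct e t"
proof -
  have o: "open (rball (e j))" for j unfolding rball_def by auto
  obtain C' where C': "C' \<subseteq> UNIV" "finite C'" "K \<subseteq> (\<Union>j\<in>C'. rball (e j))"
    using compactE_image[OF assms(1), of UNIV "\<lambda>j. rball (e j)"] o assms(2) by blast
  define t where "t = Suc (Max (insert 0 C'))"
  have "j < t" if "j \<in> C'" for j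
    unfolding t_def using C'(2) that by (simp add: le_imp_less_Suc)
  then have "K \<subseteq> Ct e t" using C'(3) unfolding Ct_def by blast
  then show ?thesis by blast
qed

lemma Bset_eq:
  assumes A: "A = {0..1} - (\<Union>j. rball (e j))" and ne: "A \<noteq> {}" and con: "connected A"
  shows "Bset e = A"
proof
  show "A \<subseteq> Bset e"
  proof
    fix x assume xA: "x \<in> A"
    then have "x \<notin> Oset e" unfolding A Oset_iff by auto
    then show "x \<in> Bset e" using xA unfolding A Bset_def by auto
  qed
next
  show "Bset e \<subseteq> A"
  proof
    fix x assume xB: "x \<in> Bset e"
    then have x01: "x \<in> {0..1}" and xO: "x \<notin> Oset e" unfolding Bset_def by auto
    show "x \<in> A"
    proof (rule ccontr)
      assume xA: "x \<notin> A"
      then obtain j0 where j0: "x \<in> rball (e j0)" using x01 unfolding A by auto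
      have j0': "lo e j0 < x" "x < hi e j0" using j0 unfolding rball_e by auto
      obtain a where aA: "a \<in> A" using ne by auto
      have a01: "a \<in> {0..1}" and anot: "\<And>j. a \<notin> rball (e j)" using aA unfolding A by auto
      have anC: "a \<notin> Ct e t" for t using anot unfolding Ct_def by auto
      have valid: "\<not> {0..1} \<subseteq> Ct e t" for t using anC a01 by auto
      have "x \<noteq> a" using xA aA by auto
      then consider "x < a" | "a < x" by linarith
      then show False
      proof cases
        case 1
        have "{0..x} \<subseteq> (\<Union>j. rball (e j))"
        proof
          fix y assume y: "y \<in> {0..x}"
          have "y \<notin> A"
          proof
            assume "y \<in> A"
            then have "x \<in> A" using connectedD_interval[OF con _ aA, of y x] y 1 by auto
            then show False using xA by simp
          qed
          then show "y \<in> (\<Union>j. rball (e j))" using y x01 unfolding A by auto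
        qed
        then obtain t where t: "{0..x} \<subseteq> Ct e t" using finite_cover[of "{0..x}" e] by auto
        define t' where "t' = max t (Suc j0)"
        have t': "{0..x} \<subseteq> Ct e t'" using t Ct_mono[of t t' e] unfolding t'_def by auto
        have j0t: "j0 < t'" unfolding t'_def by auto
        have "{0..<hi e j0} \<subseteq> Ct e t'"
        proof
          fix w assume w: "w \<in> {0..<hi e j0}"
          show "w \<in> Ct e t'"
          proof (cases "w \<le> x")
            case True then show ?thesis using t' w by auto
          next
            case False
            then have "w \<in> rball (e j0)" unfolding rball_e using w j0' by auto
            then show ?thesis unfolding Ct_def using j0t by auto
          qed
        qed
        then have "outb e t' j0" unfolding outb_iff using valid j0t by auto
        then have "x \<in> Oset e" unfolding Oset_iff using j0 by auto
        then show False using xO by simp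
      next
        case 2
        have "{x..1} \<subseteq> (\<Union>j. rball (e j))"
        proof
          fix y assume y: "y \<in> {x..1}"
          have "y \<notin> A"
          proof
            assume "y \<in> A"
            then have "x \<in> A" using connectedD_interval[OF con aA, of y x] y 2 by auto
            then show False using xA by simp
          qed
          then show "y \<in> (\<Union>j. rball (e j))" using y x01 unfolding A by auto
        qed
        then obtain t where t: "{x..1} \<subseteq> Ct e t" using finite_cover[of "{x..1}" e] by auto
        define t' where "t' = max t (Suc j0)"
        have t': "{x..1} \<subseteq> Ct e t'" using t Ct_mono[of t t' e] unfolding t'_def by auto
        have j0t: "j0 < t'" unfolding t'_def by auto
        have "{lo e j0<..1} \<subseteq> Ct e t'"
        proof
          fix w assume w: "w \<in> {lo e j0<..1}"
          show "w \<in> Ct e t'"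
          proof (cases "x \<le> w")
            case True then show ?thesis using t' w by auto
          next
            case False
            then have "w \<in> rball (e j0)" unfolding rball_e using w j0' by auto
            then show ?thesis unfolding Ct_def using j0t by auto
          qed
        qed
        then have "outb e t' j0" unfolding outb_iff using valid j0t by auto
        then have "x \<in> Oset e" unfolding Oset_iff using j0 by auto
        then show False using xO by simp
      qed
    qed
  qed
qed


lemma computableI:
  assumes r: "rc (\<lambda>w. g2 (fst (prod_decode w)) (snd (prod_decode w)))"
    and h: "\<And>p q n. F p = Some q \<Longrightarrow> (\<exists>k. g2 n (prefix_code p k) \<noteq> 0) \<and>
        (\<forall>k. g2 n (prefix_code p k) \<noteq> 0 \<longrightarrow> g2 n (prefix_code p k) = Suc (q n))"
  shows "computable F"
proof -
  have P2: "prc 2 (\<lambda>xs. prod_encode (xs ! 0, xs ! Suc 0))" by (rule prc_pe)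
  have "prc 2 (\<lambda>xs. g2 (fst (prod_decode (prod_encode (xs ! 0, xs ! Suc 0)))) (snd (prod_decode (prod_encode (xs ! 0, xs ! Suc 0)))))"
    by (rule prc_rc[OF r P2])
  then have "prc 2 (\<lambda>xs. g2 (xs ! 0) (xs ! Suc 0))" by simp
  then obtain G where G: "partrec 2 G" "\<And>xs. length xs = 2 \<Longrightarrow> G xs = Some (g2 (xs ! 0) (xs ! Suc 0))"
    unfolding prc_def by auto
  have Gxy: "G [x, y] = Some (g2 x y)" for x y using G(2)[of "[x, y]"] by simp
  show ?thesis unfolding computable_def
    by (rule exI[of _ G]) (use G(1) h in \<open>auto simp: Gxy\<close>)
qed

section \<open>Enumeration facts\<close>

lemma card_enum:
  fixes S :: "nat set"
  assumes inf: "infinite S"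
  shows "card {i \<in> S. i < enumerate S n} = n"
proof -
  have "{i \<in> S. i < enumerate S n} = enumerate S ` {..<n}"
  proof
    show "{i \<in> S. i < enumerate S n} \<subseteq> enumerate S ` {..<n}"
    proof
      fix i assume i: "i \<in> {i \<in> S. i < enumerate S n}"
      then obtain m where m: "enumerate S m = i" using enumerate_Ex[OF inf] by blast
      then have "m < n" using i inf by auto
      then show "i \<in> enumerate S ` {..<n}" using m by auto
    qed
  next
    show "enumerate S ` {..<n} \<subseteq> {i \<in> S. i < enumerate S n}"
      using inf enumerate_in_set[OF inf] by auto
  qed
  moreover have "inj_on (enumerate S) {..<n}" using inj_enumerate[OF inf] by (rule inj_on_subset) auto
  ultimately show ?thesis by (simp add: card_image)
qed

lemma enum_UNIV: "enumerate (UNIV :: nat set) n = n"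
  using card_enum[of "UNIV :: nat set" n] by (simp add: lessThan_def[symmetric])

lemma minus_one_Suc: "minus_one (\<lambda>n. Suc (p n)) = p"
  unfolding minus_one_def by (simp add: enum_UNIV)

lemma cnt_mono: "j \<le> j' \<Longrightarrow> card {i \<in> S. i < j} \<le> card {i \<in> S. i < (j'::nat)}"
  by (rule card_mono) auto

lemma cnt_Suc: "j \<in> S \<Longrightarrow> card {i \<in> S. i < Suc j} = Suc (card {i \<in> S. i < (j::nat)})"
proof -
  assume "j \<in> S"
  then have "{i \<in> S. i < Suc j} = insert j {i \<in> S. i < j}" by auto
  then show ?thesis by simp
qed

lemma enum_unique:
  fixes S :: "nat set"
  assumes inf: "infinite S" and j: "j \<in> S" and c: "card {i \<in> S. i < j} = n"
  shows "j = enumerate S n"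
proof -
  obtain m where m: "enumerate S m = j" using enumerate_Ex[OF inf j] by blast
  then have "m = n" using card_enum[OF inf, of m] c by simp
  then show ?thesis using m by simp
qed


lemma computable_shift: "computable (\<lambda>p. Some (\<lambda>n. Suc (p n)))"
proof (rule computableI[of "\<lambda>n c. if n < lenc c then Suc (Suc (nthc c n)) else 0"])
  show "rc (\<lambda>w. if fst (prod_decode w) < lenc (snd (prod_decode w))
     then Suc (Suc (nthc (snd (prod_decode w)) (fst (prod_decode w)))) else 0)"
    by (intro rc_if rcb_lt rc_lenc rc_Suc rc_nthc rc_fst rc_snd rc_id rc_const)
next
  fix p q :: baire and n :: nat assume "Some (\<lambda>n. Suc (p n)) = Some q"
  then have q: "q = (\<lambda>n. Suc (p n))" by simp
  show "(\<exists>k. (if n < lenc (prefix_code p k) then Suc (Suc (nthc (prefix_code p k) n)) else 0) \<noteq> 0) \<and>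
    (\<forall>k. (if n < lenc (prefix_code p k) then Suc (Suc (nthc (prefix_code p k) n)) else 0) \<noteq> 0 \<longrightarrow>
      (if n < lenc (prefix_code p k) then Suc (Suc (nthc (prefix_code p k) n)) else 0) = Suc (q n))"
    by (auto simp: lenc_prefix nthc_prefix q intro: exI[of _ "Suc n"])
qed

definition cnt :: "nat \<Rightarrow> nat \<Rightarrow> nat" where
  "cnt c k = (\<Sum>j<k. if 0 < nthc c j then 1 else 0)"

lemma rc_cnt: assumes a: "rc a" and b: "rc b" shows "rc (\<lambda>z. cnt (a z) (b z))"
  unfolding cnt_def by (intro rc_sum rc_if rcb_lt rc_nthc rc_comp[OF a] rc_fst rc_snd rc_id rc_const b)

definition gM :: "nat \<Rightarrow> nat \<Rightarrow> nat" where
  "gM n c = (if n < cnt c (lenc c)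
     then Suc (\<Sum>j<lenc c. if 0 < nthc c j \<and> cnt c j = n then nthc c j - 1 else 0) else 0)"

lemma rc_gM: "rc (\<lambda>w. gM (fst (prod_decode w)) (snd (prod_decode w)))"
  unfolding gM_def
  by (intro rc_if rcb_lt rcb_conj rcb_eq rc_cnt rc_lenc rc_Suc rc_sum rc_sub rc_nthc rc_fst rc_snd rc_id rc_const)

lemma sum_ind_card: "(\<Sum>i<j. if 0 < p i then 1 else 0) = card {i \<in> {i. 0 < p i}. i < (j::nat)}"
proof (induction j)
  case 0 then show ?case by simp
next
  case (Suc j)
  show ?case
  proof (cases "0 < p j")
    case True
    then show ?thesis using Suc cnt_Suc[of j "{i. 0 < p i}"] by simp
  next
    case False
    then have "{i \<in> {i. 0 < p i}. i < Suc j} = {i \<in> {i. 0 < p i}. i < j}" using less_Suc_eq by auto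
    then show ?thesis using Suc False by simp
  qed
qed

lemma cnt_prefix: "j \<le> k \<Longrightarrow> cnt (prefix_code p k) j = card {i \<in> {i. 0 < p i}. i < j}"
  unfolding cnt_def using sum_ind_card[of p j] by (simp add: nthc_prefix)

definition mF :: "baire \<Rightarrow> baire option" where
  "mF r = (if infinite {i. 0 < r i} then Some (minus_one r) else None)"

lemma computable_mF: "computable mF"
proof (rule computableI[OF rc_gM])
  fix p q n assume "mF p = Some q"
  then have inf: "infinite {i. 0 < p i}" and q: "q = minus_one p" unfolding mF_def by (auto split: if_splits)
  define S where "S = {i. 0 < p i}"
  define E where "E = enumerate S n"
  have inf': "infinite S" using inf unfolding S_def .
  have ES: "E \<in> S" unfolding E_def by (rule enumerate_in_set[OF inf'])
  have fE: "card {i \<in> S. i < E} = n" unfolding E_def by (rule card_enum[OF inf'])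
  have qn: "q n = p E - 1" unfolding q minus_one_def E_def S_def ..
  have gk: "gM n (prefix_code p k) = (if n < card {i \<in> S. i < k}
     then Suc (\<Sum>j<k. if 0 < p j \<and> card {i \<in> S. i < j} = n then p j - 1 else 0) else 0)" for k
  proof -
    have "(\<Sum>j<k. if 0 < nthc (prefix_code p k) j \<and> cnt (prefix_code p k) j = n then nthc (prefix_code p k) j - 1 else 0)
       = (\<Sum>j<k. if 0 < p j \<and> card {i \<in> S. i < j} = n then p j - 1 else 0)"
      by (rule sum.cong) (auto simp: nthc_prefix cnt_prefix S_def)
    then show ?thesis unfolding gM_def lenc_prefix cnt_prefix[OF order_refl] S_def by simp
  qed
  show "(\<exists>k. gM n (prefix_code p k) \<noteq> 0) \<and>
    (\<forall>k. gM n (prefix_code p k) \<noteq> 0 \<longrightarrow> gM n (prefix_code p k) = Suc (q n))"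
  proof
    have "n < card {i \<in> S. i < Suc E}" using cnt_Suc[OF ES] fE by simp
    then show "\<exists>k. gM n (prefix_code p k) \<noteq> 0" unfolding gk by (intro exI[of _ "Suc E"]) simp
  next
    show "\<forall>k. gM n (prefix_code p k) \<noteq> 0 \<longrightarrow> gM n (prefix_code p k) = Suc (q n)"
    proof (intro allI impI)
      fix k assume "gM n (prefix_code p k) \<noteq> 0"
      then have nk: "n < card {i \<in> S. i < k}" unfolding gk by (simp split: if_splits)
      have Ek: "E < k"
      proof (rule ccontr)
        assume "\<not> E < k"
        then have "card {i \<in> S. i < k} \<le> card {i \<in> S. i < E}" by (intro cnt_mono) simp
        then show False using nk fE by simp
      qed
      have "(\<Sum>j<k. if 0 < p j \<and> card {i \<in> S. i < j} = n then p j - 1 else 0) = (\<Sum>j<k. if j = E then p j - 1 else 0)"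
      proof (rule sum.cong)
        fix j
        have "(0 < p j \<and> card {i \<in> S. i < j} = n) = (j = E)"
        proof
          assume "0 < p j \<and> card {i \<in> S. i < j} = n"
          then show "j = E" unfolding E_def using enum_unique[OF inf'] S_def by auto
        qed (use ES fE S_def in auto)
        then show "(if 0 < p j \<and> card {i \<in> S. i < j} = n then p j - 1 else 0) = (if j = E then p j - 1 else 0)"
          by simp
      qed simp
      also have "\<dots> = p E - 1" using Ek by (simp add: sum.delta)
      finally show "gM n (prefix_code p k) = Suc (q n)" unfolding gk qn using nk by simp
    qed
  qed
qed

lemma memC_cong: "(\<And>j. j < t \<Longrightarrow> e j = e' j) \<Longrightarrow> memC e t k s = memC e' t k s"
  unfolding memC_def by auto
lemma leftcov_cong:
  assumes h: "\<And>j. j < t \<Longrightarrow> e j = e' j" shows "leftcov e t k s = leftcov e' t k s"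
proof -
  have m: "memC e t = memC e' t" using memC_cong[OF h] by (intro ext)
  show ?thesis unfolding leftcov_def m using h by auto
qed
lemma rightcov_cong:
  assumes h: "\<And>j. j < t \<Longrightarrow> e j = e' j" shows "rightcov e t k s = rightcov e' t k s"
proof -
  have m: "memC e t = memC e' t" using memC_cong[OF h] by (intro ext)
  show ?thesis unfolding rightcov_def m using h by auto
qed
lemma outb_cong:
  assumes h: "\<And>j. j < t \<Longrightarrow> e j = e' j" shows "outb e t j = outb e' t j"
proof -
  have m: "memC e t = memC e' t" using memC_cong[OF h] by (intro ext)
  have l: "leftcov e t = leftcov e' t" using leftcov_cong[OF h] by (intro ext)
  have r: "rightcov e t = rightcov e' t" using rightcov_cong[OF h] by (intro ext)
  show ?thesis unfolding outb_def valid_def m l r using h by auto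
qed

lemma outv_cong: "(\<And>j. j < snd (prod_decode n) \<Longrightarrow> e j = e' j) \<Longrightarrow> outv e n = outv e' n"
  unfolding outv_def using outb_cong[of "snd (prod_decode n)" e e' "fst (prod_decode n)"]
  by (auto simp: outb_def)

definition phiF :: "nat \<Rightarrow> baire \<Rightarrow> baire option" where
  "phiF fl p = Some (\<lambda>n. fl + outv (\<lambda>j. p j + fl - 1) n)"

lemma computable_phiF: "computable (phiF fl)"
proof (rule computableI[OF rc_gphi[of fl]])
  fix p q n assume "phiF fl p = Some q"
  then have q: "q = (\<lambda>n. fl + outv (\<lambda>j. p j + fl - 1) n)" unfolding phiF_def by simp
  have eq: "gphi fl n (prefix_code p k) = (if snd (prod_decode n) \<le> k then Suc (q n) else 0)" for k
  proof (cases "snd (prod_decode n) \<le> k")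
    case True
    have "outv (\<lambda>j. nthc (prefix_code p k) j + fl - 1) n = outv (\<lambda>j. p j + fl - 1) n"
      by (rule outv_cong) (use True in \<open>auto simp: nthc_prefix\<close>)
    then show ?thesis using True unfolding gphi_def lenc_prefix q by simp
  next
    case False then show ?thesis unfolding gphi_def lenc_prefix by simp
  qed
  show "(\<exists>k. gphi fl n (prefix_code p k) \<noteq> 0) \<and>
     (\<forall>k. gphi fl n (prefix_code p k) \<noteq> 0 \<longrightarrow> gphi fl n (prefix_code p k) = Suc (q n))"
    unfolding eq by auto
qed


lemma delta_A_outv: "delta_A (outv e) = Some (Bset e)"
  unfolding delta_A_def Bset_def outv_union ..

lemma ConC_Bset: "ConC (Bset e) = Bset e"
  unfolding ConC_def using Bset_nonempty Bset_connected Bset_closed by (auto simp: Bset_def)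

lemma ConC_good: "ConC A \<noteq> {} \<Longrightarrow> ConC A = A \<and> A \<noteq> {} \<and> connected A"
  unfolding ConC_def by (auto split: if_splits)

lemma rspaceI: "d p = Some x \<Longrightarrow> x \<in> rspace d"
  unfolding rspace_def by auto

lemma rspaceA: "delta_A p = Some x \<Longrightarrow> x \<in> rspace delta_A"
  by (rule rspaceI)

lemma compl_Suc: "compl_rep d (\<lambda>n. Suc (r n)) = Some (d r)"
  unfolding compl_rep_def by (simp add: minus_one_Suc)

lemma compl_Some:
  assumes "compl_rep d r = Some (Some y)"
  shows "infinite {i. 0 < r i} \<and> d (minus_one r) = Some y"
  using assms unfolding compl_rep_def by (auto split: if_splits)

lemma balls_minus_one:
  assumes inf: "infinite {i. 0 < p i}"
  shows "(\<Union>n. rball (minus_one p n)) = (\<Union>j. rball (p j - 1))"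
proof
  show "(\<Union>n. rball (minus_one p n)) \<subseteq> (\<Union>j. rball (p j - 1))"
    unfolding minus_one_def by auto
next
  show "(\<Union>j. rball (p j - 1)) \<subseteq> (\<Union>n. rball (minus_one p n))"
  proof
    fix x assume "x \<in> (\<Union>j. rball (p j - 1))"
    then obtain j where j: "x \<in> rball (p j - 1)" by auto
    then have "0 < p j" using rball_0 by (cases "p j") auto
    then obtain n where "enumerate {i. 0 < p i} n = j" using enumerate_Ex[OF inf] by blast
    then have "minus_one p n = p j - 1" unfolding minus_one_def by simp
    then have "x \<in> rball (minus_one p n)" using j by simp
    then show "x \<in> (\<Union>n. rball (minus_one p n))" by blast
  qed
qed

lemma sW1: "sW_le delta_A delta_I ConC (compl_rep delta_A) (compl_rep delta_I) (compl_prob delta_A delta_I ConC)"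
  unfolding sW_le_def
proof (intro exI conjI allI impI)
  show "computable mF" by (rule computable_mF)
  show "computable (\<lambda>p. Some (\<lambda>n. Suc (p n)))" by (rule computable_shift)
  fix G assume RG: "realizes (compl_rep delta_A) (compl_rep delta_I) G (compl_prob delta_A delta_I ConC)"
  show "realizes delta_A delta_I (\<lambda>p. Option.bind (Some (\<lambda>n. Suc (p n))) (\<lambda>r. Option.bind (G r) mF)) ConC"
    unfolding realizes_def
  proof (intro allI impI)
    fix p x assume px: "delta_A p = Some x" and cx: "ConC x \<noteq> {}"
    have c1: "compl_rep delta_A (\<lambda>n. Suc (p n)) = Some (Some x)" using px by (simp add: compl_Suc)
    have cp: "compl_prob delta_A delta_I ConC (Some x) = Some ` ConC x"
      unfolding compl_prob_def using rspaceA[OF px] cx by simp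
    have ne: "compl_prob delta_A delta_I ConC (Some x) \<noteq> {}" using cp cx by simp
    obtain r y' where r: "G (\<lambda>n. Suc (p n)) = Some r" "compl_rep delta_I r = Some y'" "y' \<in> Some ` ConC x"
      using RG[unfolded realizes_def, rule_format, OF c1 ne] cp by auto
    then obtain y where y: "y' = Some y" "y \<in> ConC x" by auto
    have "infinite {i. 0 < r i} \<and> delta_I (minus_one r) = Some y" using compl_Some r(2) y(1) by simp
    then show "\<exists>q y. Option.bind (Some (\<lambda>n. Suc (p n))) (\<lambda>r. Option.bind (G r) mF) = Some q \<and> delta_I q = Some y \<and> y \<in> ConC x"
      using r y by (auto simp: mF_def)
  qed
qed

lemma Some_rspace_compl: "delta_I r = Some y \<Longrightarrow> Some y \<in> rspace (compl_rep delta_I)"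
  using rspaceI[of "compl_rep delta_I" "\<lambda>n. Suc (r n)"] by (simp add: compl_Suc)

lemma compl_good:
  assumes "compl_rep delta_A p = Some x" "y \<in> Bset (\<lambda>j. p j + 0 - 1)" "delta_I r = Some y"
  shows "Some y \<in> compl_prob delta_A delta_I ConC x"
proof (cases "\<exists>A. x = Some A \<and> A \<in> rspace delta_A \<and> ConC A \<noteq> {}")
  case True
  then obtain A where A: "x = Some A" "ConC A \<noteq> {}" "A \<in> rspace delta_A" by auto
  then have inf: "infinite {i. 0 < p i}" and dA: "delta_A (minus_one p) = Some A"
    using assms(1) unfolding compl_rep_def by (auto split: if_splits)
  have Aeq: "A = {0..1} - (\<Union>j. rball ((\<lambda>j. p j + 0 - 1) j))"
    using dA balls_minus_one[OF inf] unfolding delta_A_def by simp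
  have "Bset (\<lambda>j. p j + 0 - 1) = A" using ConC_good[OF A(2)] by (intro Bset_eq[OF Aeq]) auto
  then show ?thesis using assms(2) A ConC_good[OF A(2)] unfolding compl_prob_def by auto
next
  case False
  then have "compl_prob delta_A delta_I ConC x = rspace (compl_rep delta_I)"
    unfolding compl_prob_def by (cases x) auto
  then show ?thesis using Some_rspace_compl[OF assms(3)] by simp
qed

lemma sW2: "sW_le (compl_rep delta_A) (compl_rep delta_I) (compl_prob delta_A delta_I ConC) delta_A delta_I ConC"
  unfolding sW_le_def
proof (intro exI conjI allI impI)
  show "computable (\<lambda>p. Some (\<lambda>n. Suc (p n)))" by (rule computable_shift)
  show "computable (phiF 0)" by (rule computable_phiF)
  fix G assume RG: "realizes delta_A delta_I G ConC"
  show "realizes (compl_rep delta_A) (compl_rep delta_I)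
     (\<lambda>p. Option.bind (phiF 0 p) (\<lambda>r. Option.bind (G r) (\<lambda>p. Some (\<lambda>n. Suc (p n))))) (compl_prob delta_A delta_I ConC)"
    unfolding realizes_def
  proof (intro allI impI)
    fix p x assume px: "compl_rep delta_A p = Some x"
    define e where "e = (\<lambda>j. p j + 0 - 1)"
    have q: "phiF 0 p = Some (outv e)" unfolding phiF_def e_def by simp
    have dq: "delta_A (outv e) = Some (Bset e)" by (rule delta_A_outv)
    have ne: "ConC (Bset e) \<noteq> {}" using ConC_Bset[of e] Bset_nonempty[of e] by simp
    obtain r y where r: "G (outv e) = Some r" "delta_I r = Some y" "y \<in> ConC (Bset e)"
      using RG[unfolded realizes_def, rule_format, OF dq ne] by auto
    have y: "y \<in> Bset e" using r(3) ConC_Bset by simp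
    have "Some y \<in> compl_prob delta_A delta_I ConC x" using compl_good[OF px _ r(2)] y unfolding e_def by simp
    then show "\<exists>q y. Option.bind (phiF 0 p) (\<lambda>r. Option.bind (G r) (\<lambda>p. Some (\<lambda>n. Suc (p n)))) = Some q \<and>
       compl_rep delta_I q = Some y \<and> y \<in> compl_prob delta_A delta_I ConC x"
      using q r by (auto simp: compl_Suc)
  qed
qed

lemma sW3: "sW_le (compl_rep delta_A) (compl_rep delta_I) (compl_prob delta_A delta_I ConC) delta_A delta_I (T_prob delta_A delta_I ConC)"
  unfolding sW_le_def
proof (intro exI conjI allI impI)
  show "computable (\<lambda>p. Some (\<lambda>n. Suc (p n)))" by (rule computable_shift)
  show "computable (phiF 0)" by (rule computable_phiF)
  fix G assume RG: "realizes delta_A delta_I G (T_prob delta_A delta_I ConC)"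
  show "realizes (compl_rep delta_A) (compl_rep delta_I)
     (\<lambda>p. Option.bind (phiF 0 p) (\<lambda>r. Option.bind (G r) (\<lambda>p. Some (\<lambda>n. Suc (p n))))) (compl_prob delta_A delta_I ConC)"
    unfolding realizes_def
  proof (intro allI impI)
    fix p x assume px: "compl_rep delta_A p = Some x"
    define e where "e = (\<lambda>j. p j + 0 - 1)"
    have q: "phiF 0 p = Some (outv e)" unfolding phiF_def e_def by simp
    have dq: "delta_A (outv e) = Some (Bset e)" by (rule delta_A_outv)
    have T: "T_prob delta_A delta_I ConC (Bset e) = Bset e"
      unfolding T_prob_def using rspaceA[OF dq] ConC_Bset[of e] Bset_nonempty[of e] by simp
    have ne: "T_prob delta_A delta_I ConC (Bset e) \<noteq> {}" using T Bset_nonempty[of e] by simp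
    obtain r y where r: "G (outv e) = Some r" "delta_I r = Some y" "y \<in> T_prob delta_A delta_I ConC (Bset e)"
      using RG[unfolded realizes_def, rule_format, OF dq ne] by auto
    have y: "y \<in> Bset e" using r(3) T by simp
    have "Some y \<in> compl_prob delta_A delta_I ConC x" using compl_good[OF px _ r(2)] y unfolding e_def by simp
    then show "\<exists>q y. Option.bind (phiF 0 p) (\<lambda>r. Option.bind (G r) (\<lambda>p. Some (\<lambda>n. Suc (p n)))) = Some q \<and>
       compl_rep delta_I q = Some y \<and> y \<in> compl_prob delta_A delta_I ConC x"
      using q r by (auto simp: compl_Suc)
  qed
qed

lemma sW4: "sW_le delta_A delta_I (T_prob delta_A delta_I ConC) (compl_rep delta_A) (compl_rep delta_I) (compl_prob delta_A delta_I ConC)"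
  unfolding sW_le_def
proof (intro exI conjI allI impI)
  show "computable mF" by (rule computable_mF)
  show "computable (phiF 1)" by (rule computable_phiF)
  fix G assume RG: "realizes (compl_rep delta_A) (compl_rep delta_I) G (compl_prob delta_A delta_I ConC)"
  show "realizes delta_A delta_I (\<lambda>p. Option.bind (phiF 1 p) (\<lambda>r. Option.bind (G r) mF)) (T_prob delta_A delta_I ConC)"
    unfolding realizes_def
  proof (intro allI impI)
    fix p x assume px: "delta_A p = Some x"
    define e where "e = (\<lambda>j. p j + 1 - 1)"
    have ep: "e = p" unfolding e_def by simp
    have q: "phiF 1 p = Some (\<lambda>n. Suc (outv e n))" unfolding phiF_def e_def by simp
    have c1: "compl_rep delta_A (\<lambda>n. Suc (outv e n)) = Some (Some (Bset e))"
      by (simp add: compl_Suc delta_A_outv)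
    have cp: "compl_prob delta_A delta_I ConC (Some (Bset e)) = Some ` Bset e"
      unfolding compl_prob_def using rspaceA[OF delta_A_outv[of e]] ConC_Bset[of e] Bset_nonempty[of e] by simp
    have ne: "compl_prob delta_A delta_I ConC (Some (Bset e)) \<noteq> {}" using cp Bset_nonempty[of e] by simp
    obtain r y' where r: "G (\<lambda>n. Suc (outv e n)) = Some r" "compl_rep delta_I r = Some y'" "y' \<in> Some ` Bset e"
      using RG[unfolded realizes_def, rule_format, OF c1 ne] cp by auto
    then obtain y where y: "y' = Some y" "y \<in> Bset e" by auto
    have ry: "infinite {i. 0 < r i} \<and> delta_I (minus_one r) = Some y" using compl_Some r(2) y(1) by simp
    have yT: "y \<in> T_prob delta_A delta_I ConC x"
    proof (cases "x \<in> rspace delta_A \<and> ConC x \<noteq> {}")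
      case True
      have xeq: "x = {0..1} - (\<Union>j. rball (e j))" using px unfolding delta_A_def ep by simp
      have "Bset e = x" using ConC_good True by (intro Bset_eq[OF xeq]) auto
      then show ?thesis using True y ConC_good unfolding T_prob_def by auto
    next
      case False
      then show ?thesis unfolding T_prob_def using rspaceI[of delta_I "minus_one r" y] ry by auto
    qed
    show "\<exists>q y. Option.bind (phiF 1 p) (\<lambda>r. Option.bind (G r) mF) = Some q \<and> delta_I q = Some y \<and> y \<in> T_prob delta_A delta_I ConC x"
      using q r ry yT by (auto simp: mF_def)
  qed
qed

theorem proposition6p6:
  shows "sW_eq delta_A delta_I ConC
           (compl_rep delta_A) (compl_rep delta_I) (compl_prob delta_A delta_I ConC)
       \<and> sW_eq (compl_rep delta_A) (compl_rep delta_I) (compl_prob delta_A delta_I ConC)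
           delta_A delta_I (T_prob delta_A delta_I ConC)"
  unfolding sW_eq_def using sW1 sW2 sW3 sW4 by blast


end
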